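(* Let $T\in\mathcal B(\ell_2)$ be self-adjoint of norm one and let reals $c_1<c_2$ satisfy $c_1,c_2\in\sigma(T)$. Let $\mathcal E=(e_n)_{n\in\mathbb N}$ be an orthonormal basis of $\ell_2$. Then for every $\varepsilon>0$ there are a finite $F\subseteq\mathbb N$ and a projection $P\in\mathcal B(\ell_2)$ such that $$\|[P_FTP_F,P]\|>\frac{c_2-c_1}{2}-\varepsilon$$ and, for all $n,m\in\mathbb N$, $\langle P(e_n),e_m\rangle\neq0$ implies $n,m\in F$, where $P_F$ is the orthogonal projection onto $\mathrm{span}\{e_n:n\in F\}$.
   Context: $\sigma(T)$ is the spectrum of $T$ and $[S,T]=ST-TS$. *)

theory Defs
  imports "HOL-Analysis.Analysis"
begin

text \<open>The complex Hilbert space l2 = l2(N), realised concretely as square-summable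
  sequences nat => complex. Operators are functions on sequences; only their
  behaviour on l2 matters.\<close>

type_synonym seq = "nat \<Rightarrow> complex"
type_synonym op = "seq \<Rightarrow> seq"

definition l2 :: "seq set" where
  "l2 = {x. summable (\<lambda>n. (cmod (x n))\<^sup>2)}"

definition l2_inner :: "seq \<Rightarrow> seq \<Rightarrow> complex" where
  "l2_inner x y = (\<Sum>n. x n * cnj (y n))"

definition l2_norm :: "seq \<Rightarrow> real" where
  "l2_norm x = sqrt (\<Sum>n. (cmod (x n))\<^sup>2)"

definition bounded_op :: "op \<Rightarrow> bool" where
  "bounded_op T \<longleftrightarrow>
     (\<forall>x\<in>l2. T x \<in> l2) \<and>
     (\<forall>x\<in>l2. \<forall>y\<in>l2. \<forall>a::complex. T (\<lambda>n. a * x n + y n) = (\<lambda>n. a * T x n + T y n)) \<and>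
     (\<exists>K. \<forall>x\<in>l2. l2_norm (T x) \<le> K * l2_norm x)"

definition op_norm :: "op \<Rightarrow> real" where
  "op_norm T = Sup {l2_norm (T x) | x. x \<in> l2 \<and> l2_norm x \<le> 1}"

definition self_adjoint :: "op \<Rightarrow> bool" where
  "self_adjoint T \<longleftrightarrow> bounded_op T \<and>
     (\<forall>x\<in>l2. \<forall>y\<in>l2. l2_inner (T x) y = l2_inner x (T y))"

definition is_projection :: "op \<Rightarrow> bool" where
  "is_projection P \<longleftrightarrow> self_adjoint P \<and> (\<forall>x\<in>l2. P (P x) = P x)"

definition invertible_op :: "op \<Rightarrow> bool" where
  "invertible_op T \<longleftrightarrow> bounded_op T \<and>
     (\<exists>S. bounded_op S \<and> (\<forall>x\<in>l2. S (T x) = x \<and> T (S x) = x))"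

definition op_spectrum :: "op \<Rightarrow> complex set" where
  "op_spectrum T = {z. \<not> invertible_op (\<lambda>x n. T x n - z * x n)}"

definition commutator :: "op \<Rightarrow> op \<Rightarrow> op" where
  "commutator S T = (\<lambda>x n. S (T x) n - T (S x) n)"

definition orthonormal_basis :: "(nat \<Rightarrow> seq) \<Rightarrow> bool" where
  "orthonormal_basis e \<longleftrightarrow>
     (\<forall>n. e n \<in> l2) \<and>
     (\<forall>n m. l2_inner (e n) (e m) = (if n = m then 1 else 0)) \<and>
     (\<forall>x\<in>l2. (\<forall>n. l2_inner x (e n) = 0) \<longrightarrow> x = (\<lambda>_. 0))"

definition span_proj :: "(nat \<Rightarrow> seq) \<Rightarrow> nat set \<Rightarrow> op" where
  "span_proj e F = (\<lambda>x k. \<Sum>n\<in>F. l2_inner x (e n) * e n k)"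

end

theory Submission
  imports Defs
begin

lemma l2_iff: "x \<in> l2 \<longleftrightarrow> summable (\<lambda>n. (cmod (x n))\<^sup>2)"
  by (simp add: l2_def)

lemma l2_zero[simp]: "(\<lambda>n. 0) \<in> l2"
  by (simp add: l2_def)

lemma amgm2: "(a::real) * b \<le> (a\<^sup>2 + b\<^sup>2) / 2"
proof -
  have "0 \<le> (a - b)\<^sup>2" by simp
  thus ?thesis by (simp add: power2_diff field_simps)
qed

lemma sq_sum_le: "((a::real) + b)\<^sup>2 \<le> 2 * a\<^sup>2 + 2 * b\<^sup>2"
  using amgm2[of a b] by (simp add: power2_sum)

lemma l2_prod_summable:
  assumes "x \<in> l2" "y \<in> l2"
  shows "summable (\<lambda>n. cmod (x n) * cmod (y n))"
proof (rule summable_comparison_test)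
  show "summable (\<lambda>n. ((cmod (x n))\<^sup>2 + (cmod (y n))\<^sup>2) / 2)"
    using assms by (intro summable_divide summable_add) (auto simp: l2_def)
  show "\<exists>N. \<forall>n\<ge>N. norm (cmod (x n) * cmod (y n)) \<le> ((cmod (x n))\<^sup>2 + (cmod (y n))\<^sup>2) / 2"
    using amgm2 by (auto simp: abs_mult intro!: exI[of _ 0])
qed

lemma l2_inner_summable:
  assumes "x \<in> l2" "y \<in> l2"
  shows "summable (\<lambda>n. x n * cnj (y n))"
  by (rule summable_norm_cancel) (use l2_prod_summable[OF assms] in \<open>simp add: norm_mult\<close>)

lemma l2_add[intro]:
  assumes "x \<in> l2" "y \<in> l2"
  shows "(\<lambda>n. x n + y n) \<in> l2"
proof -
  have s: "summable (\<lambda>n. 2 * (cmod (x n))\<^sup>2 + 2 * (cmod (y n))\<^sup>2)"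
    using assms by (intro summable_add summable_mult) (auto simp: l2_def)
 have b: "norm ((cmod (x n + y n))\<^sup>2) \<le> 2 * (cmod (x n))\<^sup>2 + 2 * (cmod (y n))\<^sup>2" for n
  proof -
    have "cmod (x n + y n) \<le> cmod (x n) + cmod (y n)" by (rule norm_triangle_ineq)
    hence "(cmod (x n + y n))\<^sup>2 \<le> (cmod (x n) + cmod (y n))\<^sup>2"
      by (simp add: power_mono)
    also have "\<dots> \<le> 2 * (cmod (x n))\<^sup>2 + 2 * (cmod (y n))\<^sup>2"
      by (rule sq_sum_le)
    finally show ?thesis by simp
  qed
  show ?thesis unfolding l2_def
    using summable_comparison_test'[OF s, where f="\<lambda>n. (cmod (x n + y n))\<^sup>2" and N=0] b by auto
qed

lemma l2_scale[intro]:
  assumes "x \<in> l2"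
  shows "(\<lambda>n. a * x n) \<in> l2"
proof -
  have "summable (\<lambda>n. (cmod a)\<^sup>2 * (cmod (x n))\<^sup>2)"
    using assms by (intro summable_mult) (auto simp: l2_def)
  thus ?thesis by (simp add: l2_def norm_mult power_mult_distrib)
qed

lemma l2_uminus[intro]: "x \<in> l2 \<Longrightarrow> (\<lambda>n. - x n) \<in> l2"
  using l2_scale[of x "-1"] by simp

lemma l2_diff[intro]: "x \<in> l2 \<Longrightarrow> y \<in> l2 \<Longrightarrow> (\<lambda>n. x n - y n) \<in> l2"
  using l2_add[of x "\<lambda>n. - y n"] by auto

lemma l2_sum[intro]: "(\<And>i. i \<in> I \<Longrightarrow> f i \<in> l2) \<Longrightarrow> (\<lambda>n. \<Sum>i\<in>I. f i n) \<in> l2"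
proof (induction I rule: infinite_finite_induct)
  case (insert i I)
  then show ?case using l2_add[of "f i" "\<lambda>n. \<Sum>i\<in>I. f i n"] by simp
qed auto

lemma l2_inner_add_left:
  assumes "x \<in> l2" "y \<in> l2" "z \<in> l2"
  shows "l2_inner (\<lambda>n. x n + y n) z = l2_inner x z + l2_inner y z"
  unfolding l2_inner_def
  by (simp add: distrib_right suminf_add[OF l2_inner_summable[OF assms(1,3)] l2_inner_summable[OF assms(2,3)]])

lemma l2_inner_scale_left:
  assumes "x \<in> l2" "z \<in> l2"
  shows "l2_inner (\<lambda>n. a * x n) z = a * l2_inner x z"
  unfolding l2_inner_def
  using suminf_mult[OF l2_inner_summable[OF assms], of a] by (simp add: mult.assoc)

lemma l2_inner_conj:
  assumes "x \<in> l2" "y \<in> l2"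
  shows "l2_inner y x = cnj (l2_inner x y)"
proof -
  have "(\<lambda>n. x n * cnj (y n)) sums l2_inner x y"
    unfolding l2_inner_def using l2_inner_summable[OF assms] by (simp add: summable_sums)
  hence "(\<lambda>n. cnj (x n * cnj (y n))) sums cnj (l2_inner x y)"
    by (simp only: sums_cnj)
  hence "(\<lambda>n. y n * cnj (x n)) sums cnj (l2_inner x y)"
    by (simp add: mult.commute)
  thus ?thesis unfolding l2_inner_def by (simp add: sums_iff)
qed

lemma l2_inner_add_right:
  assumes "x \<in> l2" "y \<in> l2" "z \<in> l2"
  shows "l2_inner z (\<lambda>n. x n + y n) = l2_inner z x + l2_inner z y"
  using l2_inner_conj[of "\<lambda>n. x n + y n" z] l2_inner_conj[of x z] l2_inner_conj[of y z]
    l2_inner_add_left[OF assms] assms l2_add[OF assms(1,2)] by simp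

lemma l2_inner_scale_right:
  assumes "x \<in> l2" "z \<in> l2"
  shows "l2_inner z (\<lambda>n. a * x n) = cnj a * l2_inner z x"
  using l2_inner_conj[of "\<lambda>n. a * x n" z] l2_inner_conj[of x z]
    l2_inner_scale_left[OF assms] assms l2_scale[OF assms(1)] by simp

lemma l2_inner_diff_left:
  assumes "x \<in> l2" "y \<in> l2" "z \<in> l2"
  shows "l2_inner (\<lambda>n. x n - y n) z = l2_inner x z - l2_inner y z"
  using l2_inner_add_left[of x "\<lambda>n. - y n" z] l2_inner_scale_left[of y z "-1"] assms by auto

lemma l2_inner_diff_right:
  assumes "x \<in> l2" "y \<in> l2" "z \<in> l2"
  shows "l2_inner z (\<lambda>n. x n - y n) = l2_inner z x - l2_inner z y"
  using l2_inner_conj[of "\<lambda>n. x n - y n" z] l2_inner_conj[of x z] l2_inner_conj[of y z]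
    l2_inner_diff_left[OF assms] assms l2_diff[OF assms(1,2)] by simp

lemma l2_inner_sum_left:
  assumes "\<And>i. i \<in> I \<Longrightarrow> f i \<in> l2" "z \<in> l2"
  shows "l2_inner (\<lambda>n. \<Sum>i\<in>I. f i n) z = (\<Sum>i\<in>I. l2_inner (f i) z)"
  using assms(1)
proof (induction I rule: infinite_finite_induct)
  case (infinite A) then show ?case by (simp add: l2_inner_def)
next
  case empty then show ?case by (simp add: l2_inner_def)
next
  case (insert i I)
  then show ?case
    using l2_inner_add_left[of "f i" "\<lambda>n. \<Sum>i\<in>I. f i n" z] assms(2) l2_sum[of I f] by simp
qed

lemma l2_inner_sum_right:
  assumes "\<And>i. i \<in> I \<Longrightarrow> f i \<in> l2" "z \<in> l2"
  shows "l2_inner z (\<lambda>n. \<Sum>i\<in>I. f i n) = (\<Sum>i\<in>I. l2_inner z (f i))"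
proof -
  have "l2_inner z (\<lambda>n. \<Sum>i\<in>I. f i n) = cnj (l2_inner (\<lambda>n. \<Sum>i\<in>I. f i n) z)"
    using l2_inner_conj[of "\<lambda>n. \<Sum>i\<in>I. f i n" z] l2_sum[of I f] assms by simp
  also have "\<dots> = (\<Sum>i\<in>I. cnj (l2_inner (f i) z))"
    using l2_inner_sum_left[of I f z] assms by simp
  also have "\<dots> = (\<Sum>i\<in>I. l2_inner z (f i))"
    using assms by (intro sum.cong) (auto simp: l2_inner_conj[of _ z])
  finally show ?thesis .
qed


lemma l2_norm_sq: "x \<in> l2 \<Longrightarrow> (l2_norm x)\<^sup>2 = (\<Sum>n. (cmod (x n))\<^sup>2)"
proof -
  assume x: "x \<in> l2"
  have "0 \<le> (\<Sum>n. (cmod (x n))\<^sup>2)" by (rule suminf_nonneg) (use x in \<open>auto simp: l2_def\<close>)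
  thus ?thesis unfolding l2_norm_def by simp
qed

lemma l2_norm_nonneg[simp]: "x \<in> l2 \<Longrightarrow> l2_norm x \<ge> 0"
  unfolding l2_norm_def by (rule real_sqrt_ge_zero, rule suminf_nonneg) (auto simp: l2_def)

lemma l2_inner_self: "x \<in> l2 \<Longrightarrow> l2_inner x x = of_real ((l2_norm x)\<^sup>2)"
proof -
  assume x: "x \<in> l2"
  have "l2_inner x x = (\<Sum>n. complex_of_real ((cmod (x n))\<^sup>2))"
  proof -
    have "\<And>n. x n * cnj (x n) = complex_of_real ((cmod (x n))\<^sup>2)" by (simp only: complex_norm_square)
    thus ?thesis unfolding l2_inner_def by simp
  qed
  also have "\<dots> = of_real (\<Sum>n. (cmod (x n))\<^sup>2)"
    using x by (simp add: l2_def suminf_of_real)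
  finally show ?thesis using l2_norm_sq[OF x] by simp
qed

lemma l2_norm_zero[simp]: "l2_norm (\<lambda>n. 0) = 0"
  by (simp add: l2_norm_def)

lemma l2_norm_eq_0: "x \<in> l2 \<Longrightarrow> l2_norm x = 0 \<Longrightarrow> x = (\<lambda>n. 0)"
proof -
  assume x: "x \<in> l2" and "l2_norm x = 0"
  hence "(\<Sum>n. (cmod (x n))\<^sup>2) = 0" using l2_norm_sq[OF x] by simp
  hence "\<forall>n. (cmod (x n))\<^sup>2 = 0" using x by (subst (asm) suminf_eq_zero_iff) (auto simp: l2_def)
  thus ?thesis by auto
qed

lemma l2_norm_scale: "x \<in> l2 \<Longrightarrow> l2_norm (\<lambda>n. a * x n) = cmod a * l2_norm x"
proof -
  assume x: "x \<in> l2"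
  have "(\<Sum>n. (cmod (a * x n))\<^sup>2) = (cmod a)\<^sup>2 * (\<Sum>n. (cmod (x n))\<^sup>2)"
    using x by (simp add: norm_mult power_mult_distrib suminf_mult l2_def)
  thus ?thesis unfolding l2_norm_def by (simp add: real_sqrt_mult)
qed

lemma l2_inner_zero_right[simp]: "l2_inner x (\<lambda>n. 0) = 0"
  by (simp add: l2_inner_def)

lemma l2_inner_zero_left[simp]: "l2_inner (\<lambda>n. 0) x = 0"
  by (simp add: l2_inner_def)

lemma l2_cs:
  assumes x: "x \<in> l2" and y: "y \<in> l2"
  shows "cmod (l2_inner x y) \<le> l2_norm x * l2_norm y"
proof (cases "l2_norm y = 0")
  case True
  then have "y = (\<lambda>n. 0)" using l2_norm_eq_0 y by blast
  then show ?thesis using x by simp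
next
  case False
  define Y where "Y = (l2_norm y)\<^sup>2"
  have Ypos: "Y > 0" using False y l2_norm_nonneg[OF y] by (simp add: Y_def)
  define p where "p = l2_inner x y"
  define t where "t = p / of_real Y"
  define w where "w = (\<lambda>n. x n - t * y n)"
  have ty: "(\<lambda>n. t * y n) \<in> l2" using y by auto
  have w: "w \<in> l2" using x ty by (auto simp: w_def)
  have yx: "l2_inner y x = cnj p" using l2_inner_conj[OF x y] by (simp add: p_def)
  have "l2_inner w w = l2_inner x w - t * l2_inner y w"
    unfolding w_def[of] using l2_inner_diff_left[OF x ty w] l2_inner_scale_left[OF y w] by (simp add: w_def)
  also have "l2_inner x w = l2_inner x x - cnj t * p"
    unfolding w_def using l2_inner_diff_right[OF x ty x] l2_inner_scale_right[OF y x] by (simp add: p_def)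
  also have "l2_inner y w = cnj p - cnj t * of_real Y"
    unfolding w_def using l2_inner_diff_right[OF x ty y] l2_inner_scale_right[OF y y] yx l2_inner_self[OF y]
    by (simp add: Y_def)
  finally have e: "l2_inner w w = l2_inner x x - cnj t * p - t * cnj p + t * cnj t * of_real Y"
    by (simp add: algebra_simps)
  have "cnj t * p = of_real ((cmod p)\<^sup>2 / Y)" "t * cnj p = of_real ((cmod p)\<^sup>2 / Y)"
    "t * cnj t * of_real Y = of_real ((cmod p)\<^sup>2 / Y)"
    using Ypos complex_norm_square[of p] by (auto simp: t_def field_simps mult.commute)
  with e have "l2_inner w w = of_real ((l2_norm x)\<^sup>2 - (cmod p)\<^sup>2 / Y)"
    by (simp add: l2_inner_self[OF x])
  hence "(l2_norm w)\<^sup>2 = (l2_norm x)\<^sup>2 - (cmod p)\<^sup>2 / Y"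
    using l2_inner_self[OF w] of_real_eq_iff by metis
  hence "(cmod p)\<^sup>2 / Y \<le> (l2_norm x)\<^sup>2" by (smt (verit) zero_le_power2)
  hence "(cmod p)\<^sup>2 \<le> (l2_norm x)\<^sup>2 * Y" using Ypos by (simp add: field_simps)
  hence "(cmod p)\<^sup>2 \<le> (l2_norm x * l2_norm y)\<^sup>2" by (simp add: Y_def power_mult_distrib)
  thus ?thesis unfolding p_def
    using l2_norm_nonneg[OF x] l2_norm_nonneg[OF y] by (meson mult_nonneg_nonneg power2_le_imp_le)
qed

lemma l2_norm_add_sq:
  assumes x: "x \<in> l2" and y: "y \<in> l2"
  shows "(l2_norm (\<lambda>n. x n + y n))\<^sup>2 = (l2_norm x)\<^sup>2 + (l2_norm y)\<^sup>2 + 2 * Re (l2_inner x y)"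
proof -
  have xy: "(\<lambda>n. x n + y n) \<in> l2" using x y by auto
  have "of_real ((l2_norm (\<lambda>n. x n + y n))\<^sup>2) = l2_inner (\<lambda>n. x n + y n) (\<lambda>n. x n + y n)"
    using l2_inner_self[OF xy] by simp
  also have "\<dots> = l2_inner x x + l2_inner x y + (l2_inner y x + l2_inner y y)"
    using l2_inner_add_left[OF x y xy] l2_inner_add_right[OF x y x] l2_inner_add_right[OF x y y] by simp
  also have "\<dots> = of_real ((l2_norm x)\<^sup>2 + (l2_norm y)\<^sup>2 + 2 * Re (l2_inner x y))"
    using l2_inner_conj[OF x y] l2_inner_self[OF x] l2_inner_self[OF y]
    by (simp add: complex_eq_iff)
  finally show ?thesis using of_real_eq_iff by blast
qed

lemma l2_norm_add_le:
  assumes x: "x \<in> l2" and y: "y \<in> l2"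
  shows "l2_norm (\<lambda>n. x n + y n) \<le> l2_norm x + l2_norm y"
proof -
  have "Re (l2_inner x y) \<le> l2_norm x * l2_norm y"
    using l2_cs[OF x y] complex_Re_le_cmod order_trans by blast
  hence "(l2_norm (\<lambda>n. x n + y n))\<^sup>2 \<le> (l2_norm x + l2_norm y)\<^sup>2"
    using l2_norm_add_sq[OF x y] by (simp add: power2_sum)
  thus ?thesis using l2_norm_nonneg[OF x] l2_norm_nonneg[OF y]
    by (meson add_nonneg_nonneg power2_le_imp_le)
qed

lemma l2_norm_uminus: "x \<in> l2 \<Longrightarrow> l2_norm (\<lambda>n. - x n) = l2_norm x"
  using l2_norm_scale[of x "-1"] by simp

lemma l2_norm_diff_le:
  assumes x: "x \<in> l2" and y: "y \<in> l2"
  shows "l2_norm (\<lambda>n. x n - y n) \<le> l2_norm x + l2_norm y"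
  using l2_norm_add_le[OF x l2_uminus[OF y]] l2_norm_uminus[OF y] by simp

lemma l2_norm_commute:
  assumes x: "x \<in> l2" and y: "y \<in> l2"
  shows "l2_norm (\<lambda>n. x n - y n) = l2_norm (\<lambda>n. y n - x n)"
  using l2_norm_uminus[OF l2_diff[OF x y]] by simp

lemma l2_norm_triangle:
  assumes x: "x \<in> l2" and y: "y \<in> l2" and z: "z \<in> l2"
  shows "l2_norm (\<lambda>n. x n - z n) \<le> l2_norm (\<lambda>n. x n - y n) + l2_norm (\<lambda>n. y n - z n)"
  using l2_norm_add_le[OF l2_diff[OF x y] l2_diff[OF y z]] by simp

lemma l2_norm_coord:
  assumes x: "x \<in> l2"
  shows "cmod (x n) \<le> l2_norm x"
proof -
  have "(cmod (x n))\<^sup>2 \<le> (\<Sum>n. (cmod (x n))\<^sup>2)"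
    using sum_le_suminf[of "\<lambda>n. (cmod (x n))\<^sup>2" "{n}"] x by (auto simp: l2_def)
  thus ?thesis using l2_norm_sq[OF x] l2_norm_nonneg[OF x]
    by (metis norm_ge_zero power2_le_imp_le)
qed

lemma l2_norm_sum_le:
  assumes "\<And>i. i \<in> I \<Longrightarrow> f i \<in> l2"
  shows "l2_norm (\<lambda>n. \<Sum>i\<in>I. f i n) \<le> (\<Sum>i\<in>I. l2_norm (f i))"
  using assms
proof (induction I rule: infinite_finite_induct)
  case (insert i I)
  have "l2_norm (\<lambda>n. \<Sum>i\<in>insert i I. f i n) = l2_norm (\<lambda>n. f i n + (\<Sum>i\<in>I. f i n))"
    using insert by simp
  also have "\<dots> \<le> l2_norm (f i) + l2_norm (\<lambda>n. \<Sum>i\<in>I. f i n)"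
    using l2_norm_add_le[of "f i" "\<lambda>n. \<Sum>i\<in>I. f i n"] insert l2_sum[of I f] by auto
  also have "\<dots> \<le> l2_norm (f i) + (\<Sum>i\<in>I. l2_norm (f i))" using insert by auto
  finally show ?case using insert by simp
qed auto

section \<open>Bounded operators\<close>

lemma bop_l2: "bounded_op T \<Longrightarrow> x \<in> l2 \<Longrightarrow> T x \<in> l2"
  by (simp add: bounded_op_def)

lemma bop_lin: "bounded_op T \<Longrightarrow> x \<in> l2 \<Longrightarrow> y \<in> l2 \<Longrightarrow>
   T (\<lambda>n. a * x n + y n) = (\<lambda>n. a * T x n + T y n)"
  by (simp add: bounded_op_def)

lemma bop_zero: "bounded_op T \<Longrightarrow> T (\<lambda>n. 0) = (\<lambda>n. 0)"
  using bop_lin[of T "\<lambda>n. 0" "\<lambda>n. 0" "-1"] by simp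

lemma bop_add: "bounded_op T \<Longrightarrow> x \<in> l2 \<Longrightarrow> y \<in> l2 \<Longrightarrow>
   T (\<lambda>n. x n + y n) = (\<lambda>n. T x n + T y n)"
  using bop_lin[of T x y 1] by simp

lemma bop_scale: "bounded_op T \<Longrightarrow> x \<in> l2 \<Longrightarrow> T (\<lambda>n. a * x n) = (\<lambda>n. a * T x n)"
  using bop_lin[of T x "\<lambda>n. 0" a] bop_zero[of T] by simp

lemma bop_uminus: "bounded_op T \<Longrightarrow> x \<in> l2 \<Longrightarrow> T (\<lambda>n. - x n) = (\<lambda>n. - T x n)"
  using bop_scale[of T x "-1"] by simp

lemma bop_diff: "bounded_op T \<Longrightarrow> x \<in> l2 \<Longrightarrow> y \<in> l2 \<Longrightarrow>
   T (\<lambda>n. x n - y n) = (\<lambda>n. T x n - T y n)"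
  using bop_lin[of T y x "-1"] by (simp add: algebra_simps)

lemma bop_sum: "bounded_op T \<Longrightarrow> (\<And>i. i \<in> I \<Longrightarrow> f i \<in> l2) \<Longrightarrow>
   T (\<lambda>n. \<Sum>i\<in>I. f i n) = (\<lambda>n. \<Sum>i\<in>I. T (f i) n)"
proof (induction I rule: infinite_finite_induct)
  case (insert i I)
  then show ?case using bop_add[of T "f i" "\<lambda>n. \<Sum>i\<in>I. f i n"] l2_sum[of I f] by simp
qed (auto simp: bop_zero)

lemma bop_bound: "bounded_op T \<Longrightarrow> \<exists>K>0. \<forall>x\<in>l2. l2_norm (T x) \<le> K * l2_norm x"
proof -
  assume "bounded_op T"
  then obtain K where K: "\<forall>x\<in>l2. l2_norm (T x) \<le> K * l2_norm x" by (auto simp: bounded_op_def)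
  have "\<forall>x\<in>l2. l2_norm (T x) \<le> max K 1 * l2_norm x"
  proof
    fix x assume x: "x \<in> l2"
    have "K * l2_norm x \<le> max K 1 * l2_norm x" using l2_norm_nonneg[OF x] by (simp add: mult_right_mono)
    thus "l2_norm (T x) \<le> max K 1 * l2_norm x" using K x by force
  qed
  thus ?thesis by (intro exI[of _ "max K 1"]) auto
qed

lemma l2_complete:
  assumes X: "\<And>k. X k \<in> l2"
    and Cau: "\<And>e. e > 0 \<Longrightarrow> \<exists>N. \<forall>m\<ge>N. \<forall>k\<ge>N. l2_norm (\<lambda>n. X m n - X k n) < e"
  shows "\<exists>x\<in>l2. (\<forall>n. (\<lambda>k. X k n) \<longlonglongrightarrow> x n) \<and> (\<lambda>k. l2_norm (\<lambda>n. X k n - x n)) \<longlonglongrightarrow> 0"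
proof -
  have "Cauchy (\<lambda>k. X k n)" for n
  proof (rule CauchyI)
    fix e :: real assume "e > 0"
    then obtain N where N: "\<forall>m\<ge>N. \<forall>k\<ge>N. l2_norm (\<lambda>n. X m n - X k n) < e" using Cau by blast
    show "\<exists>M. \<forall>m\<ge>M. \<forall>k\<ge>M. norm (X m n - X k n) < e"
    proof (intro exI allI impI)
      fix m k assume "N \<le> m" "N \<le> k"
      hence "l2_norm (\<lambda>n. X m n - X k n) < e" using N by blast
      moreover have "cmod (X m n - X k n) \<le> l2_norm (\<lambda>n. X m n - X k n)"
        using l2_norm_coord[OF l2_diff[OF X X]] by blast
      ultimately show "norm (X m n - X k n) < e" by simp
    qed
  qed
  then have conv: "(\<lambda>k. X k n) \<longlonglongrightarrow> lim (\<lambda>k. X k n)" for n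
    using Cauchy_convergent_iff convergent_LIMSEQ_iff by blast
  define x where "x = (\<lambda>n. lim (\<lambda>k. X k n))"
  have main: "(\<lambda>n. X k n - x n) \<in> l2 \<and> l2_norm (\<lambda>n. X k n - x n) \<le> e"
    if N: "\<forall>m\<ge>N. \<forall>k\<ge>N. l2_norm (\<lambda>n. X m n - X k n) < e" and k: "k \<ge> N" and e: "e > 0" for e N k
  proof -
    have bnd: "(\<Sum>n<M. (cmod (X k n - x n))\<^sup>2) \<le> e\<^sup>2" for M
    proof (rule LIMSEQ_le_const2)
      show "(\<lambda>j. \<Sum>n<M. (cmod (X k n - X j n))\<^sup>2) \<longlonglongrightarrow> (\<Sum>n<M. (cmod (X k n - x n))\<^sup>2)"
        unfolding x_def by (intro tendsto_intros conv)
      show "\<exists>N'. \<forall>j\<ge>N'. (\<Sum>n<M. (cmod (X k n - X j n))\<^sup>2) \<le> e\<^sup>2"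
      proof (intro exI allI impI)
        fix j assume j: "N \<le> j"
        have d: "(\<lambda>n. X k n - X j n) \<in> l2" using X by auto
        have "(\<Sum>n<M. (cmod (X k n - X j n))\<^sup>2) \<le> (\<Sum>n. (cmod (X k n - X j n))\<^sup>2)"
          using d by (intro sum_le_suminf) (auto simp: l2_def)
        also have "\<dots> = (l2_norm (\<lambda>n. X k n - X j n))\<^sup>2" using l2_norm_sq[OF d] by simp
        also have "\<dots> \<le> e\<^sup>2" using N k j l2_norm_nonneg[OF d]
          by (intro power_mono) (auto intro: less_imp_le)
        finally show "(\<Sum>n<M. (cmod (X k n - X j n))\<^sup>2) \<le> e\<^sup>2" .
      qed
    qed
    have s: "summable (\<lambda>n. (cmod (X k n - x n))\<^sup>2)"
      by (rule summableI_nonneg_bounded[OF _ bnd]) auto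
    hence d: "(\<lambda>n. X k n - x n) \<in> l2" by (simp add: l2_def)
    have "(l2_norm (\<lambda>n. X k n - x n))\<^sup>2 \<le> e\<^sup>2"
      using l2_norm_sq[OF d] suminf_le_const[OF s bnd] by simp
    hence "l2_norm (\<lambda>n. X k n - x n) \<le> e" by (rule power2_le_imp_le) (use e in simp)
    with d show ?thesis by blast
  qed
  obtain N1 where N1: "\<forall>m\<ge>N1. \<forall>k\<ge>N1. l2_norm (\<lambda>n. X m n - X k n) < 1" using Cau[of 1] by auto
  have xd: "(\<lambda>n. X N1 n - x n) \<in> l2" using main[OF N1] by auto
  have xl2: "x \<in> l2" using l2_diff[OF X[of N1] xd] by simp
  have "(\<lambda>k. l2_norm (\<lambda>n. X k n - x n)) \<longlonglongrightarrow> 0"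
  proof (rule LIMSEQ_I)
    fix r :: real assume r: "r > 0"
    then obtain N where N: "\<forall>m\<ge>N. \<forall>k\<ge>N. l2_norm (\<lambda>n. X m n - X k n) < r/2" using Cau[of "r/2"] by auto
    show "\<exists>no. \<forall>k\<ge>no. norm (l2_norm (\<lambda>n. X k n - x n) - 0) < r"
    proof (intro exI allI impI)
      fix k assume k: "N \<le> k"
      have d: "(\<lambda>n. X k n - x n) \<in> l2" using main[OF N k] r by auto
      show "norm (l2_norm (\<lambda>n. X k n - x n) - 0) < r"
        using main[OF N k] r l2_norm_nonneg[OF d] by auto
    qed
  qed
  moreover have "\<forall>n. (\<lambda>k. X k n) \<longlonglongrightarrow> x n" using conv by (simp add: x_def)
  ultimately show ?thesis using xl2 by blast
qed

lemma l2_series: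
  assumes y: "\<And>k. y k \<in> l2" and s: "summable (\<lambda>k. l2_norm (y k))"
  shows "(\<lambda>n. \<Sum>k. y k n) \<in> l2"
    and "(\<lambda>K. l2_norm (\<lambda>n. (\<Sum>k<K. y k n) - (\<Sum>k. y k n))) \<longlonglongrightarrow> 0"
    and "\<And>n. summable (\<lambda>k. y k n)"
proof -
  define P where "P = (\<lambda>K n. \<Sum>k<K. y k n)"
  have P: "P K \<in> l2" for K unfolding P_def using y by auto
  have ps: "summable (\<lambda>k. y k n)" for n
  proof (rule summable_comparison_test'[OF s, where N=0])
    fix k :: nat
    show "norm (y k n) \<le> l2_norm (y k)" using l2_norm_coord[OF y[of k]] by simp
  qed
  show "\<And>n. summable (\<lambda>k. y k n)" by (rule ps)
  have Pdiff: "l2_norm (\<lambda>n. P m n - P k n) \<le> norm (\<Sum>i\<in>{k..<m}. l2_norm (y i))" if "k \<le> m" for k m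
  proof -
    have sd: "(\<Sum>i<m. f i) - (\<Sum>i<k. f i) = (\<Sum>i\<in>{k..<m}. f i)" for f :: "nat \<Rightarrow> complex"
      using sum_diff_nat_ivl[of 0 k m f] that by (simp add: lessThan_atLeast0)
    have "(\<lambda>n. P m n - P k n) = (\<lambda>n. \<Sum>i\<in>{k..<m}. y i n)"
      unfolding P_def by (rule ext) (rule sd)
    hence "l2_norm (\<lambda>n. P m n - P k n) \<le> (\<Sum>i\<in>{k..<m}. l2_norm (y i))"
      using l2_norm_sum_le[of "{k..<m}" y] y by simp
    thus ?thesis by simp
  qed
  have Cau: "\<exists>N. \<forall>m\<ge>N. \<forall>k\<ge>N. l2_norm (\<lambda>n. P m n - P k n) < e" if e: "e > 0" for e
  proof -
    obtain N where N: "\<forall>m\<ge>N. \<forall>n. norm (\<Sum>i\<in>{m..<n}. l2_norm (y i)) < e"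
      using s e unfolding summable_Cauchy by blast
    show ?thesis
    proof (intro exI allI impI)
      fix m k assume m: "N \<le> m" and k: "N \<le> k"
      show "l2_norm (\<lambda>n. P m n - P k n) < e"
      proof (cases "k \<le> m")
        case True
        have "norm (\<Sum>i\<in>{k..<m}. l2_norm (y i)) < e" using N k by blast
        thus ?thesis using Pdiff[OF True] by linarith
      next
        case False
        have "norm (\<Sum>i\<in>{m..<k}. l2_norm (y i)) < e" using N m by blast
        hence "l2_norm (\<lambda>n. P k n - P m n) < e" using Pdiff[of m k] False by linarith
        thus ?thesis using l2_norm_commute[OF P P] by metis
      qed
    qed
  qed
  obtain x where x: "x \<in> l2" and xp: "\<forall>n. (\<lambda>k. P k n) \<longlonglongrightarrow> x n"
    and xl: "(\<lambda>k. l2_norm (\<lambda>n. P k n - x n)) \<longlonglongrightarrow> 0"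
    using l2_complete[of P, OF P Cau] by blast
  have "x n = (\<Sum>k. y k n)" for n
  proof (rule LIMSEQ_unique)
    show "(\<lambda>k. P k n) \<longlonglongrightarrow> x n" using xp by blast
    show "(\<lambda>k. P k n) \<longlonglongrightarrow> (\<Sum>k. y k n)" unfolding P_def by (rule summable_LIMSEQ[OF ps[of n]])
  qed
  hence xe: "x = (\<lambda>n. \<Sum>k. y k n)" by auto
  show "(\<lambda>n. \<Sum>k. y k n) \<in> l2" using x xe by simp
  show "(\<lambda>K. l2_norm (\<lambda>n. (\<Sum>k<K. y k n) - (\<Sum>k. y k n))) \<longlonglongrightarrow> 0"
    using xl xe unfolding P_def by simp
qed

lemma contraction:
  assumes A: "bounded_op A" and sa: "\<forall>x\<in>l2. \<forall>y\<in>l2. l2_inner (A x) y = l2_inner x (A y)"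
    and M: "\<forall>x\<in>l2. l2_norm (A x) \<le> M * l2_norm x" and Mpos: "M > 0"
    and low: "\<forall>x\<in>l2. \<delta> * l2_norm x \<le> l2_norm (A x)" and dpos: "\<delta> > 0"
    and r: "r \<in> l2"
  shows "(l2_norm (\<lambda>n. r n - complex_of_real (1/M\<^sup>2) * A (A r) n))\<^sup>2 \<le> (1 - \<delta>\<^sup>2/M\<^sup>2) * (l2_norm r)\<^sup>2"
proof -
  define t where "t = 1/M\<^sup>2"
  define s where "s = A r"
  define w where "w = A s"
  have s: "s \<in> l2" using bop_l2[OF A r] by (simp add: s_def)
  have w: "w \<in> l2" using bop_l2[OF A s] by (simp add: w_def)
  have tw: "(\<lambda>n. complex_of_real t * w n) \<in> l2" using w by auto
  define v where "v = (\<lambda>n. r n - complex_of_real t * w n)"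
  have v: "v \<in> l2" using r tw by (auto simp: v_def)
  have rw: "l2_inner r w = of_real ((l2_norm s)\<^sup>2)"
    using sa r s l2_inner_self[OF s] by (simp add: w_def s_def)
  have wr: "l2_inner w r = of_real ((l2_norm s)\<^sup>2)"
    using l2_inner_conj[OF r w] rw by simp
  have "l2_inner v v = l2_inner r v - of_real t * l2_inner w v"
    unfolding v_def[of] using l2_inner_diff_left[OF r tw v] l2_inner_scale_left[OF w v] by (simp add: v_def)
  also have "l2_inner r v = l2_inner r r - of_real t * l2_inner r w"
    unfolding v_def using l2_inner_diff_right[OF r tw r] l2_inner_scale_right[OF w r] by simp
  also have "l2_inner w v = l2_inner w r - of_real t * l2_inner w w"
    unfolding v_def using l2_inner_diff_right[OF r tw w] l2_inner_scale_right[OF w w] by simp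
  finally have "l2_inner v v = of_real ((l2_norm r)\<^sup>2 - 2 * t * (l2_norm s)\<^sup>2 + t\<^sup>2 * (l2_norm w)\<^sup>2)"
    using rw wr l2_inner_self[OF r] l2_inner_self[OF w] by (simp add: algebra_simps power2_eq_square)
  hence vv: "(l2_norm v)\<^sup>2 = (l2_norm r)\<^sup>2 - 2 * t * (l2_norm s)\<^sup>2 + t\<^sup>2 * (l2_norm w)\<^sup>2"
    using l2_inner_self[OF v] of_real_eq_iff by metis
  have "l2_norm w \<le> M * l2_norm s" using M s by (simp add: w_def)
  hence "(l2_norm w)\<^sup>2 \<le> (M * l2_norm s)\<^sup>2" using w by (simp add: power_mono)
  hence "t\<^sup>2 * (l2_norm w)\<^sup>2 \<le> t\<^sup>2 * (M * l2_norm s)\<^sup>2" by (simp add: mult_left_mono)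
  also have "\<dots> = t * (l2_norm s)\<^sup>2" using Mpos by (simp add: t_def power2_eq_square field_simps)
  finally have "(l2_norm v)\<^sup>2 \<le> (l2_norm r)\<^sup>2 - t * (l2_norm s)\<^sup>2" using vv by simp
  also have "\<delta> * l2_norm r \<le> l2_norm s" using low r by (simp add: s_def)
  hence "(\<delta> * l2_norm r)\<^sup>2 \<le> (l2_norm s)\<^sup>2" using dpos r by (simp add: power_mono)
  hence "t * (\<delta> * l2_norm r)\<^sup>2 \<le> t * (l2_norm s)\<^sup>2" by (simp add: t_def divide_right_mono)
  hence "(l2_norm r)\<^sup>2 - t * (l2_norm s)\<^sup>2 \<le> (1 - \<delta>\<^sup>2/M\<^sup>2) * (l2_norm r)\<^sup>2"
    by (simp add: t_def power_mult_distrib algebra_simps)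
  finally show ?thesis by (simp add: v_def w_def s_def t_def)
qed


lemma bounded_below_invertible:
  assumes A: "bounded_op A" and sa: "\<forall>x\<in>l2. \<forall>y\<in>l2. l2_inner (A x) y = l2_inner x (A y)"
    and dpos: "\<delta> > 0" and low: "\<forall>x\<in>l2. \<delta> * l2_norm x \<le> l2_norm (A x)"
  shows "invertible_op A"
proof -
  obtain M0 where M0: "M0 > 0" "\<forall>x\<in>l2. l2_norm (A x) \<le> M0 * l2_norm x" using bop_bound[OF A] by blast
  define M where "M = max M0 \<delta>"
  have Mpos: "M > 0" using M0 by (simp add: M_def)
  have dM: "\<delta> \<le> M" by (simp add: M_def)
  have Mb: "\<forall>x\<in>l2. l2_norm (A x) \<le> M * l2_norm x"
  proof
    fix x assume x: "x \<in> l2"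
    have "M0 * l2_norm x \<le> M * l2_norm x" using l2_norm_nonneg[OF x] by (simp add: M_def mult_right_mono)
    thus "l2_norm (A x) \<le> M * l2_norm x" using M0 x by force
  qed
  define t where "t = 1/M\<^sup>2"
  have tpos: "t > 0" using Mpos by (simp add: t_def)
  define B where "B = (\<lambda>r n. r n - complex_of_real t * A (A r) n)"
  define q where "q = sqrt (1 - \<delta>\<^sup>2/M\<^sup>2)"
  have dM2: "\<delta>\<^sup>2/M\<^sup>2 \<le> 1" using dM dpos Mpos by (simp add: power_mono)
  have dM3: "\<delta>\<^sup>2/M\<^sup>2 > 0" using dpos Mpos by simp
  have q0: "0 \<le> q" using dM2 by (simp add: q_def)
  have q1: "q < 1" using dM3 dM2 by (simp add: q_def)
  have Al2: "\<And>x. x \<in> l2 \<Longrightarrow> A x \<in> l2" using bop_l2[OF A] .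
  have Bl2: "B r \<in> l2" if r: "r \<in> l2" for r
    unfolding B_def using l2_diff[OF r l2_scale[OF Al2[OF Al2[OF r]]]] .
  have Bn: "l2_norm (B r) \<le> q * l2_norm r" if r: "r \<in> l2" for r
  proof -
    have "(l2_norm (B r))\<^sup>2 \<le> (1 - \<delta>\<^sup>2/M\<^sup>2) * (l2_norm r)\<^sup>2"
      using contraction[OF A sa Mb Mpos low dpos r] by (simp add: B_def t_def)
    also have "\<dots> = (q * l2_norm r)\<^sup>2" using dM2 by (simp add: q_def power_mult_distrib)
    finally show ?thesis by (rule power2_le_imp_le) (use q0 r in simp)
  qed
  have Blin: "B (\<lambda>n. a * x n + z n) = (\<lambda>n. a * B x n + B z n)" if x: "x \<in> l2" and z: "z \<in> l2" for a x z
  proof -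
    have "A (\<lambda>n. a * x n + z n) = (\<lambda>n. a * A x n + A z n)" using bop_lin[OF A x z] .
    hence "A (A (\<lambda>n. a * x n + z n)) = (\<lambda>n. a * A (A x) n + A (A z) n)"
      using bop_lin[OF A Al2[OF x] Al2[OF z]] by simp
    thus ?thesis unfolding B_def by (auto simp: algebra_simps)
  qed
  define R where "R = (\<lambda>b k. (B ^^ k) b)"
  have RSuc: "R b (Suc k) = B (R b k)" for b k by (simp add: R_def)
  have R0: "R b 0 = b" for b by (simp add: R_def)
  have Rl2: "R b k \<in> l2" if "b \<in> l2" for b k
    using that by (induction k) (auto simp: RSuc R0 Bl2)
  have Rn: "l2_norm (R b k) \<le> q ^ k * l2_norm b" if b: "b \<in> l2" for b k
  proof (induction k)
    case 0 thus ?case by (simp add: R0)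
  next
    case (Suc k)
    have "l2_norm (R b (Suc k)) \<le> q * l2_norm (R b k)" using Bn[OF Rl2[OF b]] by (simp add: RSuc)
    also have "\<dots> \<le> q * (q ^ k * l2_norm b)" using Suc q0 by (simp add: mult_left_mono)
    finally show ?case by simp
  qed
  have Rlin: "R (\<lambda>n. a * x n + z n) k = (\<lambda>n. a * R x k n + R z k n)" if x: "x \<in> l2" and z: "z \<in> l2" for a x z k
  proof (induction k)
    case 0 thus ?case by (simp add: R0)
  next
    case (Suc k)
    thus ?case using Blin[OF Rl2[OF x] Rl2[OF z]] by (simp add: RSuc)
  qed
  define Y where "Y = (\<lambda>b k n. complex_of_real t * A (R b k) n)"
  have Yl2: "Y b k \<in> l2" if "b \<in> l2" for b k unfolding Y_def using Al2[OF Rl2[OF that]] by auto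
  have Yn: "l2_norm (Y b k) \<le> t * M * l2_norm b * q ^ k" if b: "b \<in> l2" for b k
  proof -
    have "l2_norm (Y b k) = t * l2_norm (A (R b k))"
      unfolding Y_def using l2_norm_scale[OF Al2[OF Rl2[OF b]], of "complex_of_real t"] tpos by simp
    also have "\<dots> \<le> t * (M * l2_norm (R b k))" using Mb Rl2[OF b] tpos by (simp add: mult_left_mono)
    also have "\<dots> \<le> t * (M * (q ^ k * l2_norm b))" using Rn[OF b] tpos Mpos
      by (simp add: mult_left_mono)
    finally show ?thesis by (simp add: algebra_simps)
  qed
  have Ys: "summable (\<lambda>k. l2_norm (Y b k))" if b: "b \<in> l2" for b
  proof (rule summable_comparison_test'[where N=0])
    show "summable (\<lambda>k. t * M * l2_norm b * q ^ k)"
      using q0 q1 by (intro summable_mult summable_geometric) simp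
    fix k :: nat
    show "norm (l2_norm (Y b k)) \<le> t * M * l2_norm b * q ^ k"
      using Yn[OF b] l2_norm_nonneg[OF Yl2[OF b]] by simp
  qed
  define S where "S = (\<lambda>b n. \<Sum>k. Y b k n)"
  have Sl2: "S b \<in> l2" if b: "b \<in> l2" for b
    unfolding S_def using l2_series(1)[OF Yl2[OF b] Ys[OF b]] .
  have Slim: "(\<lambda>K. l2_norm (\<lambda>n. (\<Sum>k<K. Y b k n) - S b n)) \<longlonglongrightarrow> 0" if b: "b \<in> l2" for b
    unfolding S_def using l2_series(2)[OF Yl2[OF b] Ys[OF b]] .
  have Ysum: "summable (\<lambda>k. Y b k n)" if b: "b \<in> l2" for b n
    using l2_series(3)[OF Yl2[OF b] Ys[OF b]] .
  have Apart: "A (\<lambda>n. \<Sum>k<K. Y b k n) = (\<lambda>n. b n - R b K n)" if b: "b \<in> l2" for b K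
  proof (induction K)
    case 0 thus ?case using bop_zero[OF A] by (simp add: R0)
  next
    case (Suc K)
    have p: "(\<lambda>n. \<Sum>k<K. Y b k n) \<in> l2" using Yl2[OF b] by auto
    have "A (\<lambda>n. \<Sum>k<Suc K. Y b k n) = A (\<lambda>n. (\<Sum>k<K. Y b k n) + Y b K n)" by simp
    also have "\<dots> = (\<lambda>n. A (\<lambda>n. \<Sum>k<K. Y b k n) n + A (Y b K) n)"
      using bop_add[OF A p Yl2[OF b]] .
    also have "A (Y b K) = (\<lambda>n. complex_of_real t * A (A (R b K)) n)"
      unfolding Y_def using bop_scale[OF A Al2[OF Rl2[OF b]]] .
    finally show ?case using Suc by (simp add: RSuc B_def algebra_simps)
  qed
  have ASb: "A (S b) = b" if b: "b \<in> l2" for b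
  proof -
    define d where "d = (\<lambda>n. A (S b) n - b n)"
    have ASl2: "A (S b) \<in> l2" using Al2[OF Sl2[OF b]] .
    have dl2: "d \<in> l2" unfolding d_def using ASl2 b by auto
    have bound: "l2_norm d \<le> M * l2_norm (\<lambda>n. (\<Sum>k<K. Y b k n) - S b n) + q ^ K * l2_norm b" for K
    proof -
      define p where "p = (\<lambda>n. \<Sum>k<K. Y b k n)"
      have p: "p \<in> l2" unfolding p_def using Yl2[OF b] by auto
      have Ap: "A p \<in> l2" using Al2[OF p] .
      have "l2_norm d \<le> l2_norm (\<lambda>n. A (S b) n - A p n) + l2_norm (\<lambda>n. A p n - b n)"
        unfolding d_def by (rule l2_norm_triangle[OF ASl2 Ap b])
      also have "(\<lambda>n. A (S b) n - A p n) = A (\<lambda>n. S b n - p n)"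
        using bop_diff[OF A Sl2[OF b] p] by simp
      also have "l2_norm (A (\<lambda>n. S b n - p n)) \<le> M * l2_norm (\<lambda>n. S b n - p n)"
        using Mb l2_diff[OF Sl2[OF b] p] by blast
      also have "l2_norm (\<lambda>n. S b n - p n) = l2_norm (\<lambda>n. p n - S b n)"
        using l2_norm_commute[OF Sl2[OF b] p] .
      also have "(\<lambda>n. A p n - b n) = (\<lambda>n. - R b K n)" using Apart[OF b, of K] by (simp add: p_def)
      also have "l2_norm (\<lambda>n. - R b K n) = l2_norm (R b K)" using l2_norm_uminus[OF Rl2[OF b]] .
      finally show ?thesis using Rn[OF b, of K] unfolding p_def by simp
    qed
    have l1: "(\<lambda>K. M * l2_norm (\<lambda>n. (\<Sum>k<K. Y b k n) - S b n)) \<longlonglongrightarrow> M * 0"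
      by (rule tendsto_mult[OF tendsto_const Slim[OF b]])
    have l2': "(\<lambda>K. q ^ K * l2_norm b) \<longlonglongrightarrow> 0 * l2_norm b"
      by (rule tendsto_mult[OF LIMSEQ_power_zero tendsto_const]) (use q0 q1 in simp)
    have lim: "(\<lambda>K. M * l2_norm (\<lambda>n. (\<Sum>k<K. Y b k n) - S b n) + q ^ K * l2_norm b) \<longlonglongrightarrow> 0"
      using tendsto_add[OF l1 l2'] by simp
    have ev: "\<exists>N. \<forall>K\<ge>N. l2_norm d \<le> M * l2_norm (\<lambda>n. (\<Sum>k<K. Y b k n) - S b n) + q ^ K * l2_norm b"
      using bound by blast
    have "l2_norm d \<le> 0"
      by (rule LIMSEQ_le_const[OF lim ev])
    hence "l2_norm d = 0" using l2_norm_nonneg[OF dl2] by linarith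
    hence d0: "d = (\<lambda>n. 0)" using l2_norm_eq_0[OF dl2] by blast
    have "A (S b) n = b n" for n using fun_cong[OF d0, of n] by (simp add: d_def)
    thus ?thesis by (rule ext)
  qed
  have Slin: "S (\<lambda>n. a * x n + z n) = (\<lambda>n. a * S x n + S z n)" if x: "x \<in> l2" and z: "z \<in> l2" for a x z
  proof (rule ext)
    fix n
    have Ylin: "Y (\<lambda>n. a * x n + z n) k n = a * Y x k n + Y z k n" for k
    proof -
      have "A (R (\<lambda>n. a * x n + z n) k) = (\<lambda>n. a * A (R x k) n + A (R z k) n)"
        using Rlin[OF x z] bop_lin[OF A Rl2[OF x] Rl2[OF z]] by simp
      thus ?thesis unfolding Y_def by (simp add: algebra_simps)
    qed
    have "S (\<lambda>n. a * x n + z n) n = (\<Sum>k. a * Y x k n + Y z k n)"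
      unfolding S_def using Ylin by simp
    also have "\<dots> = (\<Sum>k. a * Y x k n) + (\<Sum>k. Y z k n)"
      using Ysum[OF x] Ysum[OF z] by (intro suminf_add[symmetric] summable_mult) auto
    also have "(\<Sum>k. a * Y x k n) = a * (\<Sum>k. Y x k n)"
      using Ysum[OF x] by (rule suminf_mult)
    finally show "S (\<lambda>n. a * x n + z n) n = a * S x n + S z n" by (simp add: S_def)
  qed
  have Sbound: "l2_norm (S b) \<le> (1/\<delta>) * l2_norm b" if b: "b \<in> l2" for b
  proof -
    have "\<delta> * l2_norm (S b) \<le> l2_norm (A (S b))" using low Sl2[OF b] by blast
    hence "\<delta> * l2_norm (S b) \<le> l2_norm b" using ASb[OF b] by simp
    thus ?thesis using dpos by (simp add: field_simps)
  qed
  have Sop: "bounded_op S"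
    unfolding bounded_op_def
  proof (intro conjI ballI allI exI)
    show "\<And>x. x \<in> l2 \<Longrightarrow> S x \<in> l2" by (rule Sl2)
    show "\<And>x y a. x \<in> l2 \<Longrightarrow> y \<in> l2 \<Longrightarrow> S (\<lambda>n. a * x n + y n) = (\<lambda>n. a * S x n + S y n)"
      by (rule Slin)
    show "\<And>x. x \<in> l2 \<Longrightarrow> l2_norm (S x) \<le> (1/\<delta>) * l2_norm x" by (rule Sbound)
  qed
  have SA: "S (A x) = x" if x: "x \<in> l2" for x
  proof -
    define d where "d = (\<lambda>n. S (A x) n - x n)"
    have SAl2: "S (A x) \<in> l2" using Sl2[OF Al2[OF x]] .
    have dl2: "d \<in> l2" unfolding d_def using SAl2 x by auto
    have "A d = (\<lambda>n. A (S (A x)) n - A x n)" unfolding d_def using bop_diff[OF A SAl2 x] .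
    also have "\<dots> = (\<lambda>n. 0)" using ASb[OF Al2[OF x]] by simp
    finally have Ad: "A d = (\<lambda>n. 0)" .
    have "\<delta> * l2_norm d \<le> l2_norm (A d)" using low dl2 by blast
    hence "\<delta> * l2_norm d \<le> 0" using Ad by simp
    hence "l2_norm d = 0" using l2_norm_nonneg[OF dl2] dpos by (simp add: mult_le_0_iff)
    hence d0: "d = (\<lambda>n. 0)" using l2_norm_eq_0[OF dl2] by blast
    have "S (A x) n = x n" for n using fun_cong[OF d0, of n] by (simp add: d_def)
    thus ?thesis by (rule ext)
  qed
  show ?thesis unfolding invertible_op_def
  proof (intro conjI exI[of _ S] ballI)
    show "bounded_op A" by (rule A)
    show "bounded_op S" by (rule Sop)
    show "\<And>x. x \<in> l2 \<Longrightarrow> S (A x) = x" by (rule SA)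
    show "\<And>x. x \<in> l2 \<Longrightarrow> A (S x) = x" by (rule ASb)
  qed
qed


lemma approx_eigen:
  assumes sa: "self_adjoint T" and sp: "complex_of_real c \<in> op_spectrum T" and dpos: "\<delta> > 0"
  shows "\<exists>x\<in>l2. l2_norm x = 1 \<and> l2_norm (\<lambda>n. T x n - complex_of_real c * x n) < \<delta>"
proof (rule ccontr)
  assume H: "\<not> ?thesis"
  define A where "A = (\<lambda>x n. T x n - complex_of_real c * x n)"
  have T: "bounded_op T" using sa by (simp add: self_adjoint_def)
  have Tsa: "\<forall>x\<in>l2. \<forall>y\<in>l2. l2_inner (T x) y = l2_inner x (T y)" using sa by (simp add: self_adjoint_def)
  obtain K where K: "K > 0" "\<forall>x\<in>l2. l2_norm (T x) \<le> K * l2_norm x" using bop_bound[OF T] by blast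
  have Tl2: "T x \<in> l2" if "x \<in> l2" for x using bop_l2[OF T that] .
  have Al2: "A x \<in> l2" if x: "x \<in> l2" for x
    unfolding A_def using l2_diff[OF Tl2[OF x] l2_scale[OF x]] .
  have Alin: "A (\<lambda>n. a * x n + y n) = (\<lambda>n. a * A x n + A y n)" if x: "x \<in> l2" and y: "y \<in> l2" for a x y
    unfolding A_def using bop_lin[OF T x y] by (auto simp: algebra_simps)
  have Abound: "l2_norm (A x) \<le> (K + \<bar>c\<bar>) * l2_norm x" if x: "x \<in> l2" for x
  proof -
    have "l2_norm (A x) \<le> l2_norm (T x) + l2_norm (\<lambda>n. complex_of_real c * x n)"
      using l2_norm_diff_le[OF Tl2[OF x] l2_scale[OF x], of "complex_of_real c"] by (simp add: A_def)
    also have "l2_norm (\<lambda>n. complex_of_real c * x n) = \<bar>c\<bar> * l2_norm x"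
      using l2_norm_scale[OF x] by simp
    moreover have "l2_norm (T x) \<le> K * l2_norm x" using K x by blast
    ultimately show ?thesis by (simp add: algebra_simps)
  qed
  have Aop: "bounded_op A"
    unfolding bounded_op_def
  proof (intro conjI ballI allI exI)
    show "\<And>x. x \<in> l2 \<Longrightarrow> A x \<in> l2" by (rule Al2)
    show "\<And>x y a. x \<in> l2 \<Longrightarrow> y \<in> l2 \<Longrightarrow> A (\<lambda>n. a * x n + y n) = (\<lambda>n. a * A x n + A y n)"
      by (rule Alin)
    show "\<And>x. x \<in> l2 \<Longrightarrow> l2_norm (A x) \<le> (K + \<bar>c\<bar>) * l2_norm x" by (rule Abound)
  qed
  have Asa: "\<forall>x\<in>l2. \<forall>y\<in>l2. l2_inner (A x) y = l2_inner x (A y)"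
  proof (intro ballI)
    fix x y assume x: "x \<in> l2" and y: "y \<in> l2"
    have "l2_inner (A x) y = l2_inner (T x) y - complex_of_real c * l2_inner x y"
      unfolding A_def using l2_inner_diff_left[OF Tl2[OF x] l2_scale[OF x] y] l2_inner_scale_left[OF x y] by simp
    also have "\<dots> = l2_inner x (T y) - cnj (complex_of_real c) * l2_inner x y"
      using Tsa x y by simp
    also have "\<dots> = l2_inner x (A y)"
      unfolding A_def using l2_inner_diff_right[OF Tl2[OF y] l2_scale[OF y] x] l2_inner_scale_right[OF y x] by simp
    finally show "l2_inner (A x) y = l2_inner x (A y)" .
  qed
  have low: "\<forall>x\<in>l2. \<delta> * l2_norm x \<le> l2_norm (A x)"
  proof
    fix x assume x: "x \<in> l2"
    show "\<delta> * l2_norm x \<le> l2_norm (A x)"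
    proof (cases "l2_norm x = 0")
      case True thus ?thesis using l2_norm_nonneg[OF Al2[OF x]] by simp
    next
      case False
      define r where "r = l2_norm x"
      have rpos: "r > 0" using False l2_norm_nonneg[OF x] by (simp add: r_def)
      define u where "u = (\<lambda>n. complex_of_real (1/r) * x n)"
      have u: "u \<in> l2" unfolding u_def by (rule l2_scale[OF x])
      have "l2_norm u = cmod (complex_of_real (1/r)) * l2_norm x" unfolding u_def by (rule l2_norm_scale[OF x])
      hence nu: "l2_norm u = 1" using rpos by (simp add: r_def norm_divide)
      have Tu: "T u = (\<lambda>n. complex_of_real (1/r) * T x n)" unfolding u_def by (rule bop_scale[OF T x])
      have Au: "A u = (\<lambda>n. complex_of_real (1/r) * A x n)"
        unfolding A_def Tu by (simp add: u_def algebra_simps)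
      have "l2_norm (A u) = cmod (complex_of_real (1/r)) * l2_norm (A x)" unfolding Au by (rule l2_norm_scale[OF Al2[OF x]])
      hence nAu: "l2_norm (A u) = l2_norm (A x) / r" using rpos by (simp add: norm_divide)
      have "\<not> (l2_norm (A u) < \<delta>)" using H u nu unfolding A_def by blast
      hence "\<delta> \<le> l2_norm (A x) / r" using nAu by simp
      thus ?thesis using rpos by (simp add: r_def field_simps)
    qed
  qed
  have "invertible_op A" by (rule bounded_below_invertible[OF Aop Asa dpos low])
  thus False using sp unfolding op_spectrum_def A_def by simp
qed

lemma mult_cnj_self: "a * cnj a = complex_of_real ((cmod a)\<^sup>2)"
  by (simp only: complex_norm_square)

lemma cnj_mult_self: "cnj a * a = complex_of_real ((cmod a)\<^sup>2)"
  by (simp only: complex_norm_square mult.commute)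

context
  fixes e :: "nat \<Rightarrow> seq"
  assumes ob: "orthonormal_basis e"
begin

lemma e_l2: "e n \<in> l2" using ob by (simp add: orthonormal_basis_def)

lemma e_orth: "l2_inner (e n) (e m) = (if n = m then 1 else 0)"
  using ob by (simp add: orthonormal_basis_def)

lemma e_max: "x \<in> l2 \<Longrightarrow> (\<forall>n. l2_inner x (e n) = 0) \<Longrightarrow> x = (\<lambda>_. 0)"
  using ob by (simp add: orthonormal_basis_def)

lemma e_norm: "l2_norm (e n) = 1"
proof -
  have "complex_of_real ((l2_norm (e n))\<^sup>2) = 1" using l2_inner_self[OF e_l2] e_orth[of n n] by simp
  hence "(l2_norm (e n))\<^sup>2 = 1" by (metis of_real_eq_1_iff)
  thus ?thesis using l2_norm_nonneg[OF e_l2[of n]] by (simp add: power2_eq_1_iff)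
qed

lemma sp_eq: "span_proj e F x = (\<lambda>k. \<Sum>n\<in>F. (\<lambda>k. l2_inner x (e n) * e n k) k)"
  by (simp add: span_proj_def)

lemma sp_terms_l2: "(\<lambda>k. a * e n k) \<in> l2" by (rule l2_scale[OF e_l2])

lemma sp_l2: "span_proj e F x \<in> l2"
  unfolding sp_eq by (rule l2_sum) (rule sp_terms_l2)

lemma sp_inner_e:
  assumes F: "finite F"
  shows "l2_inner (span_proj e F x) (e m) = (if m \<in> F then l2_inner x (e m) else 0)"
proof -
  have "l2_inner (span_proj e F x) (e m) = (\<Sum>n\<in>F. l2_inner (\<lambda>k. l2_inner x (e n) * e n k) (e m))"
    unfolding sp_eq by (rule l2_inner_sum_left[OF sp_terms_l2 e_l2])
  also have "\<dots> = (\<Sum>n\<in>F. l2_inner x (e n) * (if n = m then 1 else 0))"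
    by (rule sum.cong) (auto simp: l2_inner_scale_left[OF e_l2 e_l2] e_orth)
  also have "\<dots> = (if m \<in> F then l2_inner x (e m) else 0)"
    using F by (simp add: if_distrib[of "\<lambda>t. _ * t"] sum.delta' cong: if_cong)
  finally show ?thesis .
qed

lemma sp_inner_left:
  assumes y: "y \<in> l2"
  shows "l2_inner (span_proj e F x) y = (\<Sum>n\<in>F. l2_inner x (e n) * l2_inner (e n) y)"
proof -
  have "l2_inner (span_proj e F x) y = (\<Sum>n\<in>F. l2_inner (\<lambda>k. l2_inner x (e n) * e n k) y)"
    unfolding sp_eq by (rule l2_inner_sum_left[OF sp_terms_l2 y])
  also have "\<dots> = (\<Sum>n\<in>F. l2_inner x (e n) * l2_inner (e n) y)"
    by (rule sum.cong) (auto simp: l2_inner_scale_left[OF e_l2 y])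
  finally show ?thesis .
qed

lemma sp_inner_right:
  assumes y: "y \<in> l2"
  shows "l2_inner y (span_proj e F x) = (\<Sum>n\<in>F. cnj (l2_inner x (e n)) * l2_inner y (e n))"
proof -
  have "l2_inner y (span_proj e F x) = (\<Sum>n\<in>F. l2_inner y (\<lambda>k. l2_inner x (e n) * e n k))"
    unfolding sp_eq by (rule l2_inner_sum_right[OF sp_terms_l2 y])
  also have "\<dots> = (\<Sum>n\<in>F. cnj (l2_inner x (e n)) * l2_inner y (e n))"
    by (rule sum.cong) (auto simp: l2_inner_scale_right[OF e_l2 y])
  finally show ?thesis .
qed

lemma sp_selfadj:
  assumes x: "x \<in> l2" and y: "y \<in> l2"
  shows "l2_inner (span_proj e F x) y = l2_inner x (span_proj e F y)"
  unfolding sp_inner_left[OF y] sp_inner_right[OF x]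
  by (rule sum.cong) (auto simp: l2_inner_conj[OF e_l2 y])

lemma sp_fix:
  assumes F: "finite F" and w: "w \<in> l2" and out: "\<forall>n. n \<notin> F \<longrightarrow> l2_inner w (e n) = 0"
  shows "span_proj e F w = w"
proof -
  define d where "d = (\<lambda>k. w k - span_proj e F w k)"
  have d: "d \<in> l2" unfolding d_def using w sp_l2 by auto
  have "l2_inner d (e n) = 0" for n
    unfolding d_def using l2_inner_diff_left[OF w sp_l2 e_l2] sp_inner_e[OF F] out by auto
  hence d0: "d = (\<lambda>_. 0)" using e_max[OF d] by blast
  have "span_proj e F w k = w k" for k using fun_cong[OF d0, of k] by (simp add: d_def)
  thus ?thesis by (rule ext)
qed

lemma sp_norm_sq:
  assumes F: "finite F"
  shows "(l2_norm (span_proj e F x))\<^sup>2 = (\<Sum>n\<in>F. (cmod (l2_inner x (e n)))\<^sup>2)"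
proof -
  have "l2_inner (span_proj e F x) (span_proj e F x) = (\<Sum>n\<in>F. l2_inner x (e n) * l2_inner (e n) (span_proj e F x))"
    by (rule sp_inner_left[OF sp_l2])
  also have "\<dots> = (\<Sum>n\<in>F. complex_of_real ((cmod (l2_inner x (e n)))\<^sup>2))"
  proof (rule sum.cong)
    fix n assume n: "n \<in> F"
    have "l2_inner (e n) (span_proj e F x) = cnj (l2_inner x (e n))"
      using l2_inner_conj[OF sp_l2[of F x] e_l2[of n]] sp_inner_e[OF F, of x n] n by simp
    thus "l2_inner x (e n) * l2_inner (e n) (span_proj e F x) = complex_of_real ((cmod (l2_inner x (e n)))\<^sup>2)"
      by (simp only: mult_cnj_self)
  qed simp
  finally have "complex_of_real ((l2_norm (span_proj e F x))\<^sup>2) = complex_of_real (\<Sum>n\<in>F. (cmod (l2_inner x (e n)))\<^sup>2)"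
    using l2_inner_self[OF sp_l2] by simp
  thus ?thesis using of_real_eq_iff by blast
qed

lemma sp_norm_le:
  assumes F: "finite F" and x: "x \<in> l2"
  shows "l2_norm (span_proj e F x) \<le> l2_norm x"
proof -
  have "l2_inner x (span_proj e F x) = (\<Sum>n\<in>F. cnj (l2_inner x (e n)) * l2_inner x (e n))"
    by (rule sp_inner_right[OF x])
  also have "\<dots> = (\<Sum>n\<in>F. complex_of_real ((cmod (l2_inner x (e n)))\<^sup>2))"
    by (rule sum.cong) (simp_all only: cnj_mult_self)
  also have "\<dots> = complex_of_real ((l2_norm (span_proj e F x))\<^sup>2)"
    using sp_norm_sq[OF F] by simp
  finally have "cmod (l2_inner x (span_proj e F x)) = (l2_norm (span_proj e F x))\<^sup>2"
    using l2_norm_nonneg[OF sp_l2, of F x] by (simp add: norm_power)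
  hence "(l2_norm (span_proj e F x))\<^sup>2 \<le> l2_norm x * l2_norm (span_proj e F x)"
    using l2_cs[OF x sp_l2[of F x]] by simp
  hence "l2_norm (span_proj e F x) * l2_norm (span_proj e F x) \<le> l2_norm x * l2_norm (span_proj e F x)"
    by (simp add: power2_eq_square)
  note h = this
  show ?thesis
  proof (cases "l2_norm (span_proj e F x) > 0")
    case True thus ?thesis using mult_right_le_imp_le[OF h True] by simp
  next
    case False thus ?thesis using l2_norm_nonneg[OF sp_l2, of F x] l2_norm_nonneg[OF x] by simp
  qed
qed

lemma bessel:
  assumes F: "finite F" and x: "x \<in> l2"
  shows "(\<Sum>n\<in>F. (cmod (l2_inner x (e n)))\<^sup>2) \<le> (l2_norm x)\<^sup>2"
  using sp_norm_sq[OF F, of x] power_mono[OF sp_norm_le[OF F x] l2_norm_nonneg[OF sp_l2[of F x]], of 2]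
  by simp

lemma basis_approx:
  assumes x: "x \<in> l2"
  shows "(\<lambda>N. l2_norm (\<lambda>k. span_proj e {..<N} x k - x k)) \<longlonglongrightarrow> 0"
proof -
  define c where "c = (\<lambda>n. l2_inner x (e n))"
  have cs: "summable (\<lambda>n. (cmod (c n))\<^sup>2)"
  proof (rule summableI_nonneg_bounded)
    show "\<And>n. 0 \<le> (cmod (c n))\<^sup>2" by simp
    show "\<And>n. (\<Sum>i<n. (cmod (c i))\<^sup>2) \<le> (l2_norm x)\<^sup>2"
      unfolding c_def by (rule bessel[OF _ x]) simp
  qed
  define Q where "Q = (\<lambda>N. span_proj e {..<N} x)"
  have Q: "Q N \<in> l2" for N unfolding Q_def by (rule sp_l2)
  have Qd: "(l2_norm (\<lambda>k. Q N k - Q M k))\<^sup>2 = (\<Sum>n\<in>{M..<N}. (cmod (c n))\<^sup>2)" if MN: "M \<le> N" for M N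
  proof -
    have sd: "(\<Sum>i<N. f i) - (\<Sum>i<M. f i) = (\<Sum>i\<in>{M..<N}. f i)" for f :: "nat \<Rightarrow> complex"
      using sum_diff_nat_ivl[of 0 M N f] MN by (simp add: lessThan_atLeast0)
    have "(\<lambda>k. Q N k - Q M k) = span_proj e {M..<N} x"
      unfolding Q_def span_proj_def by (rule ext) (rule sd)
    thus ?thesis using sp_norm_sq[of "{M..<N}" x] by (simp add: c_def)
  qed
  have Cau: "\<exists>N0. \<forall>m\<ge>N0. \<forall>k\<ge>N0. l2_norm (\<lambda>n. Q m n - Q k n) < r" if r: "r > 0" for r
  proof -
    obtain N0 where N0: "\<forall>m\<ge>N0. \<forall>n. norm (\<Sum>i\<in>{m..<n}. (cmod (c i))\<^sup>2) < r\<^sup>2"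
      using cs r unfolding summable_Cauchy by (meson zero_less_power)
    have lt: "l2_norm (\<lambda>n. Q N n - Q M n) < r" if MN: "M \<le> N" and M: "N0 \<le> M" for M N
    proof -
      have "norm (\<Sum>i\<in>{M..<N}. (cmod (c i))\<^sup>2) < r\<^sup>2" using N0 M by blast
      hence "(l2_norm (\<lambda>n. Q N n - Q M n))\<^sup>2 < r\<^sup>2" using Qd[OF MN] by simp
      thus ?thesis by (rule power2_less_imp_less) (use r in simp)
    qed
    show ?thesis
    proof (intro exI allI impI)
      fix m k assume m: "N0 \<le> m" and k: "N0 \<le> k"
      show "l2_norm (\<lambda>n. Q m n - Q k n) < r"
      proof (cases "k \<le> m")
        case True thus ?thesis using lt[OF True k] by simp
      next
        case False
        hence "l2_norm (\<lambda>n. Q k n - Q m n) < r" using lt[of m k] m by simp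
        thus ?thesis using l2_norm_commute[OF Q Q] by metis
      qed
    qed
  qed
  obtain y where y: "y \<in> l2" and yl: "(\<lambda>N. l2_norm (\<lambda>n. Q N n - y n)) \<longlonglongrightarrow> 0"
    using l2_complete[of Q, OF Q Cau] by blast
  have ip: "l2_inner (\<lambda>n. x n - y n) (e m) = 0" for m
  proof -
    have bnd: "cmod (l2_inner (\<lambda>n. x n - y n) (e m)) \<le> l2_norm (\<lambda>n. Q N n - y n)" if N: "N > m" for N
    proof -
      have "l2_inner (Q N) (e m) = l2_inner x (e m)" unfolding Q_def using sp_inner_e[of "{..<N}" x m] N by simp
      hence "l2_inner (\<lambda>n. x n - y n) (e m) = l2_inner (\<lambda>n. Q N n - y n) (e m)"
        using l2_inner_diff_left[OF x y e_l2] l2_inner_diff_left[OF Q y e_l2] by simp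
      also have "cmod \<dots> \<le> l2_norm (\<lambda>n. Q N n - y n) * l2_norm (e m)"
        by (rule l2_cs[OF l2_diff[OF Q y] e_l2])
      finally show ?thesis by (simp add: e_norm)
    qed
    have "cmod (l2_inner (\<lambda>n. x n - y n) (e m)) \<le> 0"
      by (rule LIMSEQ_le_const[OF yl]) (use bnd in \<open>intro exI[of _ "Suc m"], auto\<close>)
    thus ?thesis by simp
  qed
  have "(\<lambda>n. x n - y n) = (\<lambda>_. 0)" using e_max[OF l2_diff[OF x y]] ip by blast
  hence "x n = y n" for n by (metis (mono_tags) eq_iff_diff_eq_0)
  hence "x = y" by (rule ext)
  thus ?thesis using yl by (simp add: Q_def)
qed

end

definition rproj :: "seq \<Rightarrow> op" where
  "rproj u = (\<lambda>v n. l2_inner v u * u n)"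

lemma rproj_l2: "u \<in> l2 \<Longrightarrow> rproj u v \<in> l2"
  unfolding rproj_def by (rule l2_scale)

lemma rproj_norm: "u \<in> l2 \<Longrightarrow> l2_norm u = 1 \<Longrightarrow> v \<in> l2 \<Longrightarrow> l2_norm (rproj u v) \<le> l2_norm v"
  unfolding rproj_def using l2_norm_scale l2_cs[of v u] by simp

lemma rproj_self: "u \<in> l2 \<Longrightarrow> l2_norm u = 1 \<Longrightarrow> rproj u u = u"
  unfolding rproj_def using l2_inner_self[of u] by simp

lemma rproj_is_projection:
  assumes u: "u \<in> l2" and nu: "l2_norm u = 1"
  shows "is_projection (rproj u)"
proof -
  have lin: "rproj u (\<lambda>n. a * x n + y n) = (\<lambda>n. a * rproj u x n + rproj u y n)"
    if x: "x \<in> l2" and y: "y \<in> l2" for a x y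
    unfolding rproj_def using l2_inner_add_left[OF l2_scale[OF x] y u] l2_inner_scale_left[OF x u]
    by (simp add: algebra_simps)
  have bop: "bounded_op (rproj u)"
    unfolding bounded_op_def
  proof (intro conjI ballI allI exI)
    show "\<And>x. x \<in> l2 \<Longrightarrow> rproj u x \<in> l2" by (rule rproj_l2[OF u])
    show "\<And>x y a. x \<in> l2 \<Longrightarrow> y \<in> l2 \<Longrightarrow> rproj u (\<lambda>n. a * x n + y n) = (\<lambda>n. a * rproj u x n + rproj u y n)"
      by (rule lin)
    show "\<And>x. x \<in> l2 \<Longrightarrow> l2_norm (rproj u x) \<le> 1 * l2_norm x" using rproj_norm[OF u nu] by simp
  qed
  have sa: "l2_inner (rproj u x) y = l2_inner x (rproj u y)" if x: "x \<in> l2" and y: "y \<in> l2" for x y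
  proof -
    have 1: "l2_inner (rproj u x) y = l2_inner x u * l2_inner u y"
      unfolding rproj_def by (rule l2_inner_scale_left[OF u y])
    have 2: "l2_inner x (rproj u y) = cnj (l2_inner y u) * l2_inner x u"
      unfolding rproj_def by (rule l2_inner_scale_right[OF u x])
    show ?thesis unfolding 1 2 l2_inner_conj[OF y u] by (rule mult.commute)
  qed
  have idem: "rproj u (rproj u x) = rproj u x" if x: "x \<in> l2" for x
  proof -
    have "l2_inner (rproj u x) u = l2_inner x u"
      unfolding rproj_def using l2_inner_scale_left[OF u u] l2_inner_self[OF u] nu by simp
    thus ?thesis by (simp add: rproj_def)
  qed
  show ?thesis unfolding is_projection_def self_adjoint_def using bop sa idem by blast
qed

context
  fixes e :: "nat \<Rightarrow> seq"
  assumes ob: "orthonormal_basis e"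
begin

lemma rproj_support:
  assumes F: "finite F"
  shows "l2_inner (rproj (span_proj e F w) (e n)) (e m) \<noteq> 0 \<longrightarrow> n \<in> F \<and> m \<in> F"
proof -
  define u where "u = span_proj e F w"
  have u: "u \<in> l2" unfolding u_def by (rule sp_l2[OF ob])
  have "l2_inner (rproj u (e n)) (e m) = l2_inner (e n) u * l2_inner u (e m)"
    unfolding rproj_def using l2_inner_scale_left[OF u e_l2[OF ob]] by simp
  also have "l2_inner (e n) u = cnj (l2_inner u (e n))" using l2_inner_conj[OF u e_l2[OF ob]] by simp
  finally show ?thesis using sp_inner_e[OF ob F, of w] unfolding u_def by auto
qed

lemma comm_bound:
  assumes F: "finite F" and T: "bounded_op T"
    and u: "u \<in> l2" and nu: "l2_norm u = 1" and uF: "span_proj e F u = u"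
    and y: "y \<in> l2" and yF: "span_proj e F y = y"
  shows "cmod (l2_inner (T u) y - l2_inner (T u) u * l2_inner u y) / l2_norm y
     \<le> op_norm (commutator (span_proj e F \<circ> T \<circ> span_proj e F) (rproj u))"
proof -
  define PF where "PF = span_proj e F"
  define A where "A = PF \<circ> T \<circ> PF"
  define C where "C = commutator A (rproj u)"
  obtain K where K: "K > 0" "\<forall>x\<in>l2. l2_norm (T x) \<le> K * l2_norm x" using bop_bound[OF T] by blast
  have PFl2: "PF v \<in> l2" for v unfolding PF_def by (rule sp_l2[OF ob])
  have PFn: "v \<in> l2 \<Longrightarrow> l2_norm (PF v) \<le> l2_norm v" for v unfolding PF_def by (rule sp_norm_le[OF ob F])
  have Tl2: "v \<in> l2 \<Longrightarrow> T v \<in> l2" for v by (rule bop_l2[OF T])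
  have Al2: "A v \<in> l2" for v unfolding A_def using PFl2 by simp
  have An: "v \<in> l2 \<Longrightarrow> l2_norm (A v) \<le> K * l2_norm v" for v
  proof -
    assume v: "v \<in> l2"
    have "l2_norm (A v) \<le> l2_norm (T (PF v))" unfolding A_def using PFn[OF Tl2[OF PFl2]] by simp
    also have "\<dots> \<le> K * l2_norm (PF v)" using K PFl2 by blast
    also have "\<dots> \<le> K * l2_norm v" using PFn[OF v] K by (simp add: mult_left_mono)
    finally show ?thesis .
  qed
  have Cbound: "l2_norm (C x) \<le> 2 * K" if x: "x \<in> l2" and nx: "l2_norm x \<le> 1" for x
  proof -
    have "C x = (\<lambda>n. A (rproj u x) n - rproj u (A x) n)" by (simp add: C_def commutator_def)
    hence "l2_norm (C x) \<le> l2_norm (A (rproj u x)) + l2_norm (rproj u (A x))"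
      using l2_norm_diff_le[OF Al2 rproj_l2[OF u]] by simp
    also have "l2_norm (A (rproj u x)) \<le> K * l2_norm (rproj u x)" by (rule An[OF rproj_l2[OF u]])
    also have "\<dots> \<le> K * l2_norm x" using rproj_norm[OF u nu x] K by (simp add: mult_left_mono)
    also have "l2_norm (rproj u (A x)) \<le> l2_norm (A x)" by (rule rproj_norm[OF u nu Al2])
    also have "\<dots> \<le> K * l2_norm x" by (rule An[OF x])
    finally have "l2_norm (C x) \<le> 2 * K * l2_norm x" by simp
    also have "\<dots> \<le> 2 * K" using nx K by simp
    finally show ?thesis .
  qed
  have bdd: "bdd_above {l2_norm (C x) | x. x \<in> l2 \<and> l2_norm x \<le> 1}"
    unfolding bdd_above_def using Cbound by blast
  have Cu_in: "l2_norm (C u) \<in> {l2_norm (C x) | x. x \<in> l2 \<and> l2_norm x \<le> 1}" using u nu by auto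
  have CuS: "l2_norm (C u) \<le> op_norm C"
    unfolding op_norm_def by (rule cSup_upper[OF Cu_in bdd])
  have PFu: "PF u = u" using uF by (simp add: PF_def)
  have PFy: "PF y = y" using yF by (simp add: PF_def)
  have Au: "A u = PF (T u)" unfolding A_def using PFu by simp
  have "C u = (\<lambda>n. A (rproj u u) n - rproj u (A u) n)" by (simp add: C_def commutator_def)
  also have "\<dots> = (\<lambda>n. A u n - rproj u (A u) n)" by (simp only: rproj_self[OF u nu])
  also have "\<dots> = (\<lambda>n. PF (T u) n - l2_inner (PF (T u)) u * u n)" by (simp only: Au rproj_def)
  finally have Cu: "C u = (\<lambda>n. PF (T u) n - l2_inner (PF (T u)) u * u n)" .
  have i1: "l2_inner (PF (T u)) y = l2_inner (T u) y"
    using sp_selfadj[OF ob Tl2[OF u] y, of F] yF by (simp add: PF_def)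
  have i2: "l2_inner (PF (T u)) u = l2_inner (T u) u"
    using sp_selfadj[OF ob Tl2[OF u] u, of F] uF by (simp add: PF_def)
  have "l2_inner (C u) y = l2_inner (PF (T u)) y - l2_inner (PF (T u)) u * l2_inner u y"
    unfolding Cu using l2_inner_diff_left[OF PFl2 l2_scale[OF u] y] l2_inner_scale_left[OF u y] by simp
  hence Cuy: "l2_inner (C u) y = l2_inner (T u) y - l2_inner (T u) u * l2_inner u y" using i1 i2 by simp
  have Cul2: "C u \<in> l2" unfolding Cu using PFl2 u by auto
  have cs: "cmod (l2_inner (C u) y) \<le> l2_norm (C u) * l2_norm y" by (rule l2_cs[OF Cul2 y])
  have "cmod (l2_inner (T u) y - l2_inner (T u) u * l2_inner u y) / l2_norm y \<le> l2_norm (C u)"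
  proof (cases "l2_norm y > 0")
    case True thus ?thesis using cs Cuy by (simp add: divide_le_eq)
  next
    case False thus ?thesis using l2_norm_nonneg[OF y] l2_norm_nonneg[OF Cul2] by simp
  qed
  thus ?thesis using CuS unfolding C_def A_def PF_def by simp
qed

end

lemma resid_bound:
  assumes T: "bounded_op T" and K: "\<forall>x\<in>l2. l2_norm (T x) \<le> K * l2_norm x" and K0: "K \<ge> 0"
    and x: "x \<in> l2" and z: "z \<in> l2"
    and h1: "l2_norm (\<lambda>n. T x n - complex_of_real c * x n) < d"
    and h2: "l2_norm (\<lambda>n. z n - x n) < d"
  shows "l2_norm (\<lambda>n. T z n - complex_of_real c * z n) \<le> (K + 1 + \<bar>c\<bar>) * d"
proof -
  have zx: "(\<lambda>n. z n - x n) \<in> l2" using z x by auto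
  define v1 where "v1 = T (\<lambda>n. z n - x n)"
  define v2 where "v2 = (\<lambda>n. T x n - complex_of_real c * x n)"
  define v3 where "v3 = (\<lambda>n. complex_of_real c * (z n - x n))"
  have v1: "v1 \<in> l2" unfolding v1_def by (rule bop_l2[OF T zx])
  have v2: "v2 \<in> l2" unfolding v2_def using bop_l2[OF T x] x by auto
  have v3: "v3 \<in> l2" unfolding v3_def by (rule l2_scale[OF zx])
  have v1e: "v1 = (\<lambda>n. T z n - T x n)" unfolding v1_def by (rule bop_diff[OF T z x])
  have eq: "(\<lambda>n. T z n - complex_of_real c * z n) = (\<lambda>n. (v1 n + v2 n) - v3 n)"
    unfolding v1e v2_def v3_def by (auto simp: algebra_simps)
  have "l2_norm (\<lambda>n. (v1 n + v2 n) - v3 n) \<le> l2_norm (\<lambda>n. v1 n + v2 n) + l2_norm v3"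
    by (rule l2_norm_diff_le[OF l2_add[OF v1 v2] v3])
  also have "l2_norm (\<lambda>n. v1 n + v2 n) \<le> l2_norm v1 + l2_norm v2" by (rule l2_norm_add_le[OF v1 v2])
  also have "l2_norm v1 \<le> K * l2_norm (\<lambda>n. z n - x n)" unfolding v1_def using K zx by blast
  also have "\<dots> \<le> K * d" using h2 K0 by (simp add: mult_left_mono)
  also have "l2_norm v3 = \<bar>c\<bar> * l2_norm (\<lambda>n. z n - x n)" unfolding v3_def using l2_norm_scale[OF zx] by simp
  also have "\<dots> \<le> \<bar>c\<bar> * d" using h2 by (simp add: mult_left_mono)
  finally have "l2_norm (\<lambda>n. (v1 n + v2 n) - v3 n) \<le> K * d + l2_norm v2 + \<bar>c\<bar> * d" by simp
  thus ?thesis using h1 unfolding eq v2_def by (simp add: algebra_simps)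
qed

lemma ip_to_zero:
  assumes R: "\<And>k. R k \<in> l2" and Z: "\<And>k. Z k \<in> l2"
    and r0: "(\<lambda>k. l2_norm (R k)) \<longlonglongrightarrow> 0" and zL: "(\<lambda>k. l2_norm (Z k)) \<longlonglongrightarrow> L"
  shows "(\<lambda>k. l2_inner (R k) (Z k)) \<longlonglongrightarrow> 0"
proof (rule Lim_null_comparison)
  show "\<forall>\<^sub>F k in sequentially. norm (l2_inner (R k) (Z k)) \<le> l2_norm (R k) * l2_norm (Z k)"
    using l2_cs[OF R Z] by simp
  show "(\<lambda>k. l2_norm (R k) * l2_norm (Z k)) \<longlonglongrightarrow> 0"
    using tendsto_mult[OF r0 zL] by simp
qed


lemma sp_fix_comb:
  assumes ob: "orthonormal_basis e" and F: "finite F"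
  shows "span_proj e F (\<lambda>n. a * span_proj e F x n + b * span_proj e F y n)
       = (\<lambda>n. a * span_proj e F x n + b * span_proj e F y n)"
proof (rule sp_fix[OF ob F])
  have px: "span_proj e F x \<in> l2" and py: "span_proj e F y \<in> l2" using sp_l2[OF ob] by auto
  show "(\<lambda>n. a * span_proj e F x n + b * span_proj e F y n) \<in> l2" using px py by auto
  show "\<forall>n. n \<notin> F \<longrightarrow> l2_inner (\<lambda>n. a * span_proj e F x n + b * span_proj e F y n) (e n) = 0"
  proof (intro allI impI)
    fix m assume m: "m \<notin> F"
    have "l2_inner (\<lambda>n. a * span_proj e F x n + b * span_proj e F y n) (e m)
        = a * l2_inner (span_proj e F x) (e m) + b * l2_inner (span_proj e F y) (e m)"
      using l2_inner_add_left[OF l2_scale[OF px] l2_scale[OF py] e_l2[OF ob]]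
        l2_inner_scale_left[OF px e_l2[OF ob]] l2_inner_scale_left[OF py e_l2[OF ob]] by simp
    thus "l2_inner (\<lambda>n. a * span_proj e F x n + b * span_proj e F y n) (e m) = 0"
      using sp_inner_e[OF ob F] m by simp
  qed
qed

theorem lemma3p1:
  fixes T :: op and c1 c2 :: real and e :: "nat \<Rightarrow> seq"
  assumes "self_adjoint T"
    and "op_norm T = 1"
    and "c1 < c2"
    and "complex_of_real c1 \<in> op_spectrum T"
    and "complex_of_real c2 \<in> op_spectrum T"
    and "orthonormal_basis e"
  shows "\<forall>\<epsilon>>0. \<exists>F P. finite F \<and> is_projection P \<and>
           op_norm (commutator (span_proj e F \<circ> T \<circ> span_proj e F) P) > (c2 - c1) / 2 - \<epsilon> \<and>
           (\<forall>n m. l2_inner (P (e n)) (e m) \<noteq> 0 \<longrightarrow> n \<in> F \<and> m \<in> F)"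
proof (intro allI impI)
  fix \<epsilon> :: real assume epos: "\<epsilon> > 0"
  note sa = assms(1) and c12 = assms(3) and sp1 = assms(4) and sp2 = assms(5) and ob = assms(6)
  have T: "bounded_op T" using sa by (simp add: self_adjoint_def)
  have Tsa: "\<forall>x\<in>l2. \<forall>y\<in>l2. l2_inner (T x) y = l2_inner x (T y)" using sa by (simp add: self_adjoint_def)
  obtain K where Kpos: "K > 0" and K: "\<forall>x\<in>l2. l2_norm (T x) \<le> K * l2_norm x" using bop_bound[OF T] by blast
  have Tl2: "x \<in> l2 \<Longrightarrow> T x \<in> l2" for x by (rule bop_l2[OF T])
  define \<delta> where "\<delta> = (\<lambda>k::nat. inverse (real (Suc k)))"
  have dpos: "\<delta> k > 0" for k by (simp add: \<delta>_def)
  have d0: "\<delta> \<longlonglongrightarrow> 0" unfolding \<delta>_def by (rule LIMSEQ_inverse_real_of_nat)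
  define Q where "Q = (\<lambda>k N x1 x2. x1 \<in> l2 \<and> x2 \<in> l2 \<and> l2_norm x1 = 1 \<and> l2_norm x2 = 1 \<and>
      l2_norm (\<lambda>n. T x1 n - complex_of_real c1 * x1 n) < \<delta> k \<and>
      l2_norm (\<lambda>n. T x2 n - complex_of_real c2 * x2 n) < \<delta> k \<and>
      l2_norm (\<lambda>n. span_proj e {..<N} x1 n - x1 n) < \<delta> k \<and>
      l2_norm (\<lambda>n. span_proj e {..<N} x2 n - x2 n) < \<delta> k)"
  have ex: "\<exists>t. Q k (fst t) (fst (snd t)) (snd (snd t))" for k
  proof -
    obtain x1 where x1: "x1 \<in> l2" "l2_norm x1 = 1" "l2_norm (\<lambda>n. T x1 n - complex_of_real c1 * x1 n) < \<delta> k"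
      using approx_eigen[OF sa sp1 dpos] by blast
    obtain x2 where x2: "x2 \<in> l2" "l2_norm x2 = 1" "l2_norm (\<lambda>n. T x2 n - complex_of_real c2 * x2 n) < \<delta> k"
      using approx_eigen[OF sa sp2 dpos] by blast
    have ev1: "eventually (\<lambda>N. l2_norm (\<lambda>n. span_proj e {..<N} x1 n - x1 n) < \<delta> k) sequentially"
      by (rule order_tendstoD(2)[OF basis_approx[OF ob x1(1)] dpos])
    have ev2: "eventually (\<lambda>N. l2_norm (\<lambda>n. span_proj e {..<N} x2 n - x2 n) < \<delta> k) sequentially"
      by (rule order_tendstoD(2)[OF basis_approx[OF ob x2(1)] dpos])
    obtain N where N: "\<forall>n\<ge>N. l2_norm (\<lambda>m. span_proj e {..<n} x1 m - x1 m) < \<delta> k \<and>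
        l2_norm (\<lambda>m. span_proj e {..<n} x2 m - x2 m) < \<delta> k"
      using eventually_conj[OF ev1 ev2] unfolding eventually_sequentially by blast
    have "Q k N x1 x2" unfolding Q_def using x1 x2 N by blast
    thus ?thesis by (intro exI[of _ "(N, x1, x2)"]) simp
  qed
  obtain f where f: "\<forall>k. Q k (fst (f k)) (fst (snd (f k))) (snd (snd (f k)))"
  proof -
    have "\<forall>k. \<exists>t. Q k (fst t) (fst (snd t)) (snd (snd t))" using ex by blast
    from choice[OF this] show ?thesis using that by blast
  qed
  define N where "N = (\<lambda>k. fst (f k))"
  define X1 where "X1 = (\<lambda>k. fst (snd (f k)))"
  define X2 where "X2 = (\<lambda>k. snd (snd (f k)))"
  have Qk: "Q k (N k) (X1 k) (X2 k)" for k using f by (simp add: N_def X1_def X2_def)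
  have X1: "X1 k \<in> l2" "l2_norm (X1 k) = 1" "l2_norm (\<lambda>n. T (X1 k) n - complex_of_real c1 * X1 k n) < \<delta> k"
      "l2_norm (\<lambda>n. span_proj e {..<N k} (X1 k) n - X1 k n) < \<delta> k" for k
    using Qk[of k] unfolding Q_def by auto
  have X2: "X2 k \<in> l2" "l2_norm (X2 k) = 1" "l2_norm (\<lambda>n. T (X2 k) n - complex_of_real c2 * X2 k n) < \<delta> k"
      "l2_norm (\<lambda>n. span_proj e {..<N k} (X2 k) n - X2 k n) < \<delta> k" for k
    using Qk[of k] unfolding Q_def by auto
  define Z1 where "Z1 = (\<lambda>k. span_proj e {..<N k} (X1 k))"
  define Z2 where "Z2 = (\<lambda>k. span_proj e {..<N k} (X2 k))"
  have Z1: "Z1 k \<in> l2" for k unfolding Z1_def by (rule sp_l2[OF ob])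
  have Z2: "Z2 k \<in> l2" for k unfolding Z2_def by (rule sp_l2[OF ob])
  have dz1: "l2_norm (\<lambda>n. Z1 k n - X1 k n) < \<delta> k" for k using X1(4) by (simp add: Z1_def)
  have dz2: "l2_norm (\<lambda>n. Z2 k n - X2 k n) < \<delta> k" for k using X2(4) by (simp add: Z2_def)
  define R1 where "R1 = (\<lambda>k n. T (Z1 k) n - complex_of_real c1 * Z1 k n)"
  define R2 where "R2 = (\<lambda>k n. T (Z2 k) n - complex_of_real c2 * Z2 k n)"
  have R1: "R1 k \<in> l2" for k unfolding R1_def by (rule l2_diff[OF Tl2[OF Z1] l2_scale[OF Z1]])
  have R2: "R2 k \<in> l2" for k unfolding R2_def by (rule l2_diff[OF Tl2[OF Z2] l2_scale[OF Z2]])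
  have nR1: "l2_norm (R1 k) \<le> (K + 1 + \<bar>c1\<bar>) * \<delta> k" for k
    unfolding R1_def using resid_bound[OF T K _ X1(1) Z1 X1(3)] X1(4) Kpos by (simp add: Z1_def)
  have nR2: "l2_norm (R2 k) \<le> (K + 1 + \<bar>c2\<bar>) * \<delta> k" for k
    unfolding R2_def using resid_bound[OF T K _ X2(1) Z2 X2(3)] X2(4) Kpos by (simp add: Z2_def)
  have R1t: "(\<lambda>k. l2_norm (R1 k)) \<longlonglongrightarrow> 0"
  proof (rule Lim_null_comparison)
    show "\<forall>\<^sub>F k in sequentially. norm (l2_norm (R1 k)) \<le> (K + 1 + \<bar>c1\<bar>) * \<delta> k"
      using nR1 l2_norm_nonneg[OF R1] by simp
    show "(\<lambda>k. (K + 1 + \<bar>c1\<bar>) * \<delta> k) \<longlonglongrightarrow> 0" using tendsto_mult[OF tendsto_const d0] by simp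
  qed
  have R2t: "(\<lambda>k. l2_norm (R2 k)) \<longlonglongrightarrow> 0"
  proof (rule Lim_null_comparison)
    show "\<forall>\<^sub>F k in sequentially. norm (l2_norm (R2 k)) \<le> (K + 1 + \<bar>c2\<bar>) * \<delta> k"
      using nR2 l2_norm_nonneg[OF R2] by simp
    show "(\<lambda>k. (K + 1 + \<bar>c2\<bar>) * \<delta> k) \<longlonglongrightarrow> 0" using tendsto_mult[OF tendsto_const d0] by simp
  qed
  have znorm: "\<bar>l2_norm z - 1\<bar> \<le> d" if x: "x \<in> l2" "l2_norm x = 1" and z: "z \<in> l2"
    and zx: "l2_norm (\<lambda>n. z n - x n) < d" for x z d
  proof -
    have zx': "(\<lambda>n. z n - x n) \<in> l2" using z x by auto
    have "l2_norm z \<le> l2_norm x + l2_norm (\<lambda>n. z n - x n)"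
      using l2_norm_add_le[OF x(1) zx'] by simp
    moreover have "l2_norm x \<le> l2_norm z + l2_norm (\<lambda>n. x n - z n)"
      using l2_norm_add_le[OF z l2_diff[OF x(1) z]] by simp
    moreover have "l2_norm (\<lambda>n. x n - z n) = l2_norm (\<lambda>n. z n - x n)" by (rule l2_norm_commute[OF x(1) z])
    ultimately show ?thesis using zx x(2) by linarith
  qed
  have Z1n: "(\<lambda>k. l2_norm (Z1 k)) \<longlonglongrightarrow> 1"
  proof -
    have "(\<lambda>k. l2_norm (Z1 k) - 1) \<longlonglongrightarrow> 0"
    proof (rule Lim_null_comparison)
      show "\<forall>\<^sub>F k in sequentially. norm (l2_norm (Z1 k) - 1) \<le> \<delta> k"
        using znorm[OF X1(1) X1(2) Z1 dz1] by simp
    qed (rule d0)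
    thus ?thesis using tendsto_add[OF _ tendsto_const[of 1]] by fastforce
  qed
  have Z2n: "(\<lambda>k. l2_norm (Z2 k)) \<longlonglongrightarrow> 1"
  proof -
    have "(\<lambda>k. l2_norm (Z2 k) - 1) \<longlonglongrightarrow> 0"
    proof (rule Lim_null_comparison)
      show "\<forall>\<^sub>F k in sequentially. norm (l2_norm (Z2 k) - 1) \<le> \<delta> k"
        using znorm[OF X2(1) X2(2) Z2 dz2] by simp
    qed (rule d0)
    thus ?thesis using tendsto_add[OF _ tendsto_const[of 1]] by fastforce
  qed
  have TZ1: "T (Z1 k) = (\<lambda>n. R1 k n + complex_of_real c1 * Z1 k n)" for k by (simp add: R1_def)
  have TZ2: "T (Z2 k) = (\<lambda>n. R2 k n + complex_of_real c2 * Z2 k n)" for k by (simp add: R2_def)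
  have t1w: "l2_inner (T (Z1 k)) w = l2_inner (R1 k) w + complex_of_real c1 * l2_inner (Z1 k) w" if w: "w \<in> l2" for k w
    unfolding TZ1 using l2_inner_add_left[OF R1 l2_scale[OF Z1] w] l2_inner_scale_left[OF Z1 w] by simp
  have t2w: "l2_inner (T (Z2 k)) w = l2_inner (R2 k) w + complex_of_real c2 * l2_inner (Z2 k) w" if w: "w \<in> l2" for k w
    unfolding TZ2 using l2_inner_add_left[OF R2 l2_scale[OF Z2] w] l2_inner_scale_left[OF Z2 w] by simp
  have self_t: "(\<lambda>k. l2_inner (Z k) (Z k)) \<longlonglongrightarrow> 1" if Z: "\<And>k. Z k \<in> l2" and Zn: "(\<lambda>k. l2_norm (Z k)) \<longlonglongrightarrow> 1" for Z
  proof -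
    have "(\<lambda>k. complex_of_real ((l2_norm (Z k))\<^sup>2)) \<longlonglongrightarrow> complex_of_real (1\<^sup>2)"
      by (rule tendsto_of_real[OF tendsto_power[OF Zn]])
    thus ?thesis using l2_inner_self[OF Z] by simp
  qed
  have a_t: "(\<lambda>k. l2_inner (Z1 k) (Z1 k)) \<longlonglongrightarrow> 1" by (rule self_t[OF Z1 Z1n])
  have b_t: "(\<lambda>k. l2_inner (Z2 k) (Z2 k)) \<longlonglongrightarrow> 1" by (rule self_t[OF Z2 Z2n])
  have r12: "(\<lambda>k. l2_inner (R1 k) (Z2 k)) \<longlonglongrightarrow> 0" by (rule ip_to_zero[OF R1 Z2 R1t Z2n])
  have r11: "(\<lambda>k. l2_inner (R1 k) (Z1 k)) \<longlonglongrightarrow> 0" by (rule ip_to_zero[OF R1 Z1 R1t Z1n])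
  have r21: "(\<lambda>k. l2_inner (R2 k) (Z1 k)) \<longlonglongrightarrow> 0" by (rule ip_to_zero[OF R2 Z1 R2t Z1n])
  have r22: "(\<lambda>k. l2_inner (R2 k) (Z2 k)) \<longlonglongrightarrow> 0" by (rule ip_to_zero[OF R2 Z2 R2t Z2n])
  have geq: "l2_inner (Z1 k) (Z2 k) = (l2_inner (R1 k) (Z2 k) - cnj (l2_inner (R2 k) (Z1 k))) / complex_of_real (c2 - c1)" for k
  proof -
    have "l2_inner (T (Z1 k)) (Z2 k) = l2_inner (Z1 k) (T (Z2 k))" using Tsa Z1 Z2 by blast
    also have "l2_inner (Z1 k) (T (Z2 k)) = l2_inner (Z1 k) (R2 k) + complex_of_real c2 * l2_inner (Z1 k) (Z2 k)"
      unfolding TZ2 using l2_inner_add_right[OF R2 l2_scale[OF Z2] Z1] l2_inner_scale_right[OF Z2 Z1] by simp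
    also have "l2_inner (Z1 k) (R2 k) = cnj (l2_inner (R2 k) (Z1 k))" by (rule l2_inner_conj[OF R2 Z1])
    finally have "l2_inner (R1 k) (Z2 k) + complex_of_real c1 * l2_inner (Z1 k) (Z2 k)
       = cnj (l2_inner (R2 k) (Z1 k)) + complex_of_real c2 * l2_inner (Z1 k) (Z2 k)"
      using t1w[OF Z2] by simp
    hence "complex_of_real (c2 - c1) * l2_inner (Z1 k) (Z2 k) = l2_inner (R1 k) (Z2 k) - cnj (l2_inner (R2 k) (Z1 k))"
      by (simp add: algebra_simps)
    moreover have "complex_of_real (c2 - c1) \<noteq> 0" using c12 by simp
    ultimately show ?thesis by (simp add: field_simps)
  qed
  have g_t: "(\<lambda>k. l2_inner (Z1 k) (Z2 k)) \<longlonglongrightarrow> 0"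
  proof -
    have "(\<lambda>k. (l2_inner (R1 k) (Z2 k) - cnj (l2_inner (R2 k) (Z1 k))) / complex_of_real (c2 - c1))
        \<longlonglongrightarrow> (0 - cnj 0) / complex_of_real (c2 - c1)"
      by (rule tendsto_divide[OF tendsto_diff[OF r12 tendsto_cnj[OF r21]] tendsto_const]) (use c12 in simp)
    thus ?thesis using geq by simp
  qed
  have gc: "l2_inner (Z2 k) (Z1 k) = cnj (l2_inner (Z1 k) (Z2 k))" for k by (rule l2_inner_conj[OF Z1 Z2])
  have gc_t: "(\<lambda>k. l2_inner (Z2 k) (Z1 k)) \<longlonglongrightarrow> 0"
    using tendsto_cnj[OF g_t] gc by simp
  have t11: "(\<lambda>k. l2_inner (T (Z1 k)) (Z1 k)) \<longlonglongrightarrow> complex_of_real c1"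
    using tendsto_add[OF r11 tendsto_mult[OF tendsto_const a_t]] t1w[OF Z1] by simp
  have t12: "(\<lambda>k. l2_inner (T (Z1 k)) (Z2 k)) \<longlonglongrightarrow> 0"
    using tendsto_add[OF r12 tendsto_mult[OF tendsto_const g_t]] t1w[OF Z2] by simp
  have t21: "(\<lambda>k. l2_inner (T (Z2 k)) (Z1 k)) \<longlonglongrightarrow> 0"
    using tendsto_add[OF r21 tendsto_mult[OF tendsto_const gc_t]] t2w[OF Z1] by simp
  have t22: "(\<lambda>k. l2_inner (T (Z2 k)) (Z2 k)) \<longlonglongrightarrow> complex_of_real c2"
    using tendsto_add[OF r22 tendsto_mult[OF tendsto_const b_t]] t2w[OF Z2] by simp
  define U where "U = (\<lambda>k n. Z1 k n + Z2 k n)"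
  define Y where "Y = (\<lambda>k n. Z2 k n - Z1 k n)"
  have U: "U k \<in> l2" for k unfolding U_def by (rule l2_add[OF Z1 Z2])
  have Y: "Y k \<in> l2" for k unfolding Y_def by (rule l2_diff[OF Z2 Z1])
  have TU: "T (U k) = (\<lambda>n. T (Z1 k) n + T (Z2 k) n)" for k unfolding U_def by (rule bop_add[OF T Z1 Z2])
  have al_eq: "l2_inner (T (U k)) (Y k) = (l2_inner (T (Z1 k)) (Z2 k) - l2_inner (T (Z1 k)) (Z1 k))
      + (l2_inner (T (Z2 k)) (Z2 k) - l2_inner (T (Z2 k)) (Z1 k))" for k
    unfolding TU using l2_inner_add_left[OF Tl2[OF Z1] Tl2[OF Z2] Y]
      l2_inner_diff_right[OF Z2 Z1 Tl2[OF Z1]] l2_inner_diff_right[OF Z2 Z1 Tl2[OF Z2]] by (simp add: Y_def)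
  have be_eq: "l2_inner (T (U k)) (U k) = (l2_inner (T (Z1 k)) (Z1 k) + l2_inner (T (Z1 k)) (Z2 k))
      + (l2_inner (T (Z2 k)) (Z1 k) + l2_inner (T (Z2 k)) (Z2 k))" for k
    unfolding TU using l2_inner_add_left[OF Tl2[OF Z1] Tl2[OF Z2] U]
      l2_inner_add_right[OF Z1 Z2 Tl2[OF Z1]] l2_inner_add_right[OF Z1 Z2 Tl2[OF Z2]] by (simp add: U_def)
  have ga_eq: "l2_inner (U k) (Y k) = (l2_inner (Z1 k) (Z2 k) - l2_inner (Z1 k) (Z1 k))
      + (l2_inner (Z2 k) (Z2 k) - l2_inner (Z2 k) (Z1 k))" for k
    using l2_inner_add_left[OF Z1 Z2 Y] l2_inner_diff_right[OF Z2 Z1 Z1] l2_inner_diff_right[OF Z2 Z1 Z2]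
    by (simp add: Y_def U_def)
  have UU_eq: "l2_inner (U k) (U k) = (l2_inner (Z1 k) (Z1 k) + l2_inner (Z1 k) (Z2 k))
      + (l2_inner (Z2 k) (Z1 k) + l2_inner (Z2 k) (Z2 k))" for k
    using l2_inner_add_left[OF Z1 Z2 U] l2_inner_add_right[OF Z1 Z2 Z1] l2_inner_add_right[OF Z1 Z2 Z2]
    by (simp add: U_def)
  have YY_eq: "l2_inner (Y k) (Y k) = (l2_inner (Z2 k) (Z2 k) - l2_inner (Z2 k) (Z1 k))
      - (l2_inner (Z1 k) (Z2 k) - l2_inner (Z1 k) (Z1 k))" for k
    using l2_inner_diff_left[OF Z2 Z1 Y] l2_inner_diff_right[OF Z2 Z1 Z1] l2_inner_diff_right[OF Z2 Z1 Z2]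
    by (simp add: Y_def)
  have al_t: "(\<lambda>k. l2_inner (T (U k)) (Y k)) \<longlonglongrightarrow> (0 - complex_of_real c1) + (complex_of_real c2 - 0)"
    unfolding al_eq by (rule tendsto_add[OF tendsto_diff[OF t12 t11] tendsto_diff[OF t22 t21]])
  have be_t: "(\<lambda>k. l2_inner (T (U k)) (U k)) \<longlonglongrightarrow> (complex_of_real c1 + 0) + (0 + complex_of_real c2)"
    unfolding be_eq by (rule tendsto_add[OF tendsto_add[OF t11 t12] tendsto_add[OF t21 t22]])
  have ga_t: "(\<lambda>k. l2_inner (U k) (Y k)) \<longlonglongrightarrow> (0 - 1) + (1 - 0)"
    unfolding ga_eq by (rule tendsto_add[OF tendsto_diff[OF g_t a_t] tendsto_diff[OF b_t gc_t]])
  have UU_t: "(\<lambda>k. l2_inner (U k) (U k)) \<longlonglongrightarrow> (1 + 0) + (0 + 1)"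
    unfolding UU_eq by (rule tendsto_add[OF tendsto_add[OF a_t g_t] tendsto_add[OF gc_t b_t]])
  have YY_t: "(\<lambda>k. l2_inner (Y k) (Y k)) \<longlonglongrightarrow> (1 - 0) - (0 - 1)"
    unfolding YY_eq by (rule tendsto_diff[OF tendsto_diff[OF b_t gc_t] tendsto_diff[OF g_t a_t]])
  have norm_t: "(\<lambda>k. l2_norm (W k)) \<longlonglongrightarrow> sqrt 2"
    if W: "\<And>k. W k \<in> l2" and WW: "(\<lambda>k. l2_inner (W k) (W k)) \<longlonglongrightarrow> 2" for W
  proof -
    have "(\<lambda>k. Re (l2_inner (W k) (W k))) \<longlonglongrightarrow> Re 2" by (rule tendsto_Re[OF WW])
    hence "(\<lambda>k. (l2_norm (W k))\<^sup>2) \<longlonglongrightarrow> 2" using l2_inner_self[OF W] by simp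
    hence "(\<lambda>k. sqrt ((l2_norm (W k))\<^sup>2)) \<longlonglongrightarrow> sqrt 2" by (rule tendsto_real_sqrt)
    thus ?thesis using l2_norm_nonneg[OF W] by simp
  qed
  have s_t: "(\<lambda>k. l2_norm (U k)) \<longlonglongrightarrow> sqrt 2" by (rule norm_t[OF U]) (use UU_t in simp)
  have ny_t: "(\<lambda>k. l2_norm (Y k)) \<longlonglongrightarrow> sqrt 2" by (rule norm_t[OF Y]) (use YY_t in simp)
  define \<sigma> where "\<sigma> = (\<lambda>k. complex_of_real (1 / l2_norm (U k)))"
  have sig_t: "\<sigma> \<longlonglongrightarrow> complex_of_real (1 / sqrt 2)"
    unfolding \<sigma>_def by (rule tendsto_of_real[OF tendsto_divide[OF tendsto_const s_t]]) simp
  define u where "u = (\<lambda>k n. \<sigma> k * U k n)"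
  have u: "u k \<in> l2" for k unfolding u_def by (rule l2_scale[OF U])
  have Tu: "T (u k) = (\<lambda>n. \<sigma> k * T (U k) n)" for k unfolding u_def by (rule bop_scale[OF T U])
  have cs: "cnj (\<sigma> k) = \<sigma> k" for k by (simp add: \<sigma>_def)
  have i1: "l2_inner (T (u k)) (Y k) = \<sigma> k * l2_inner (T (U k)) (Y k)" for k
    unfolding Tu by (rule l2_inner_scale_left[OF Tl2[OF U] Y])
  have i2: "l2_inner (T (u k)) (u k) = \<sigma> k * \<sigma> k * l2_inner (T (U k)) (U k)" for k
    unfolding Tu using l2_inner_scale_left[OF Tl2[OF U] u] l2_inner_scale_right[OF U Tl2[OF U]] cs
    by (simp add: u_def)
  have i3: "l2_inner (u k) (Y k) = \<sigma> k * l2_inner (U k) (Y k)" for k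
    unfolding u_def by (rule l2_inner_scale_left[OF U Y])
  define V where "V = (\<lambda>k. cmod (l2_inner (T (u k)) (Y k) - l2_inner (T (u k)) (u k) * l2_inner (u k) (Y k)) / l2_norm (Y k))"
  define s0 where "s0 = complex_of_real (1 / sqrt 2)"
  have in_t: "(\<lambda>k. l2_inner (T (u k)) (Y k) - l2_inner (T (u k)) (u k) * l2_inner (u k) (Y k))
     \<longlonglongrightarrow> s0 * ((0 - complex_of_real c1) + (complex_of_real c2 - 0))
        - s0 * s0 * ((complex_of_real c1 + 0) + (0 + complex_of_real c2)) * (s0 * ((0 - 1) + (1 - 0)))"
    unfolding i1 i2 i3 s0_def
    by (rule tendsto_diff[OF tendsto_mult[OF sig_t al_t]
          tendsto_mult[OF tendsto_mult[OF tendsto_mult[OF sig_t sig_t] be_t] tendsto_mult[OF sig_t ga_t]]])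
  have V_t0: "V \<longlonglongrightarrow> cmod (s0 * ((0 - complex_of_real c1) + (complex_of_real c2 - 0))
        - s0 * s0 * ((complex_of_real c1 + 0) + (0 + complex_of_real c2)) * (s0 * ((0 - 1) + (1 - 0)))) / sqrt 2"
    unfolding V_def by (rule tendsto_divide[OF tendsto_norm[OF in_t] ny_t]) simp
  have Lval: "cmod (s0 * ((0 - complex_of_real c1) + (complex_of_real c2 - 0))
        - s0 * s0 * ((complex_of_real c1 + 0) + (0 + complex_of_real c2)) * (s0 * ((0 - 1) + (1 - 0)))) / sqrt 2
      = (c2 - c1) / 2"
  proof -
    have eqc: "s0 * ((0 - complex_of_real c1) + (complex_of_real c2 - 0))
        - s0 * s0 * ((complex_of_real c1 + 0) + (0 + complex_of_real c2)) * (s0 * ((0 - 1) + (1 - 0)))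
        = complex_of_real ((c2 - c1) / sqrt 2)" (is "?L = _")
      by (simp add: s0_def algebra_simps)
    have "cmod ?L = cmod (complex_of_real ((c2 - c1) / sqrt 2))" using eqc by (rule arg_cong)
    also have "\<dots> = \<bar>(c2 - c1) / sqrt 2\<bar>" by (rule norm_of_real)
    also have "\<dots> = (c2 - c1) / sqrt 2" using c12 by simp
    finally have h: "cmod ?L = (c2 - c1) / sqrt 2" .
    have "(c2 - c1) / sqrt 2 / sqrt 2 = (c2 - c1) / 2" by (simp add: divide_divide_eq_left)
    thus ?thesis unfolding h .
  qed
  have V_t: "V \<longlonglongrightarrow> (c2 - c1) / 2" using V_t0 unfolding Lval .
  have ev1: "eventually (\<lambda>k. (c2 - c1) / 2 - \<epsilon> < V k) sequentially"
    by (rule order_tendstoD(1)[OF V_t]) (use epos in linarith)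
  have ev2: "eventually (\<lambda>k. 0 < l2_norm (U k)) sequentially"
    by (rule order_tendstoD(1)[OF s_t]) simp
  obtain k where k1: "(c2 - c1) / 2 - \<epsilon> < V k" and k2: "0 < l2_norm (U k)"
    using eventually_happens'[OF _ eventually_conj[OF ev1 ev2]] by auto
  show "\<exists>F P. finite F \<and> is_projection P \<and>
           op_norm (commutator (span_proj e F \<circ> T \<circ> span_proj e F) P) > (c2 - c1) / 2 - \<epsilon> \<and>
           (\<forall>n m. l2_inner (P (e n)) (e m) \<noteq> 0 \<longrightarrow> n \<in> F \<and> m \<in> F)"
  proof (intro exI conjI)
    define F where "F = {..<N k}"
    have Ffin: "finite F" by (simp add: F_def)
    have nu: "l2_norm (u k) = 1"
    proof -
      have "l2_norm (u k) = cmod (\<sigma> k) * l2_norm (U k)" unfolding u_def by (rule l2_norm_scale[OF U])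
      thus ?thesis using k2 by (simp add: \<sigma>_def norm_divide)
    qed
    have ueq: "u k = (\<lambda>n. \<sigma> k * span_proj e F (X1 k) n + \<sigma> k * span_proj e F (X2 k) n)"
      by (simp add: u_def U_def Z1_def Z2_def F_def algebra_simps)
    have uF: "span_proj e F (u k) = u k"
      unfolding ueq by (rule sp_fix_comb[OF ob Ffin])
    have yeq: "Y k = (\<lambda>n. 1 * span_proj e F (X2 k) n + (-1) * span_proj e F (X1 k) n)"
      by (simp add: Y_def Z1_def Z2_def F_def)
    have YF: "span_proj e F (Y k) = Y k"
      unfolding yeq by (rule sp_fix_comb[OF ob Ffin])
    have "V k \<le> op_norm (commutator (span_proj e F \<circ> T \<circ> span_proj e F) (rproj (u k)))"
      unfolding V_def by (rule comm_bound[OF ob Ffin T u nu uF Y YF])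
    thus "(c2 - c1) / 2 - \<epsilon> < op_norm (commutator (span_proj e F \<circ> T \<circ> span_proj e F) (rproj (u k)))"
      using k1 by linarith
    show "finite F" by (rule Ffin)
    show "is_projection (rproj (u k))" by (rule rproj_is_projection[OF u nu])
    show "\<forall>n m. l2_inner (rproj (u k) (e n)) (e m) \<noteq> 0 \<longrightarrow> n \<in> F \<and> m \<in> F"
      using rproj_support[OF ob Ffin, of "u k"] uF by simp
  qed

qed

end
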